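(* Let $R$ be a commutative ring and $n\ge3$. Let $(v_1,w_1),(v_2,w_2)$ be points of the unit sphere $U_{2n-1}(R)=\{(v,w)\in H(R^n): v\cdot w^{\intercal}=1\}$. Then $(v_1,w_1)$ and $(v_2,w_2)$ lie in the same $\operatorname{Epin}_{2n}(R)$-orbit if and only if $v_1$ and $v_2$ lie in the same $E_n(R)$-orbit (i.e. $v_2=v_1\varepsilon$ for some $\varepsilon\in E_n(R)$). Consequently $v\mapsto(v,w)$ (for any $w$ with $v\cdot w^{\intercal}=1$) induces a bijection $$Um_n(R)/E_n(R)\;\longleftrightarrow\;U_{2n-1}(R)/\operatorname{Epin}_{2n}(R)=U_{2n-1}(R)/EO_{2n}(R).$$
   Context: $Um_n(R)$ is the set of unimodular rows $v\in R^n$ (there is $w\in R^n$ with $v\cdot w^{\intercal}=1$); $E_n(R)\subseteq GL_n(R)$, generated by elementary matrices $I+\lambda e_{ij}$ ($i\ne j$), acts on rows on the right. $H(R^n)=R^n\oplus(R^n)^*$ with $q(v,w)=v\cdot w^{\intercal}$ and basis $e_1,\dots,e_n,f_1,\dots,f_n$. Let $\partial=(1\ n+1)\cdots(n\ 2n)$ and $E^o_{ij}(\lambda)=I_{2n}+\lambda(e_{ij}-e_{\partial(j)\partial(i)})$ for $1\le i\ne j\le 2n$; $EO_{2n}(R)$ is the group they generate, acting on $H(R^n)$ via matrices in the ordered basis $(e_1,\dots,e_n,f_1,\dots,f_n)$. $\mathrm{Cl}=\mathrm{Cl}_0\oplus\mathrm{Cl}_1$ is the Clifford algebra of $(H(R^n),q)$,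 $x\mapsto x^*$ its canonical involution (identity on $H(R^n)$). $\operatorname{Spin}_{2n}(R)=\{x\in\mathrm{Cl}_0: xx^*=1,\ xH(R^n)x^{-1}=H(R^n)\}$ acts on $H(R^n)$ by $\pi(g)(u)=gug^{-1}$, and $\operatorname{Epin}_{2n}(R)=\pi^{-1}(EO_{2n}(R))$. *)

theory Defs
  imports "Jordan_Normal_Form.Matrix"
begin

definition rowmul :: "'a::comm_ring_1 vec \<Rightarrow> 'a mat \<Rightarrow> 'a vec" where
  "rowmul v A = transpose_mat A *\<^sub>v v"   (* the row vector  v A *)

inductive_set gen_group :: "nat \<Rightarrow> 'a::comm_ring_1 mat set \<Rightarrow> 'a mat set"
  for n :: nat and S :: "'a mat set" where
  gg_one: "1\<^sub>m n \<in> gen_group n S"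
| gg_mult: "A \<in> gen_group n S \<Longrightarrow> s \<in> S \<Longrightarrow> A * s \<in> gen_group n S"
| gg_inv: "A \<in> gen_group n S \<Longrightarrow> B \<in> carrier_mat n n \<Longrightarrow> A * B = 1\<^sub>m n
            \<Longrightarrow> B \<in> gen_group n S"

(* matrix unit e_ij of size m (0-indexed) *)
definition emat :: "nat \<Rightarrow> nat \<Rightarrow> nat \<Rightarrow> 'a::comm_ring_1 mat" where
  "emat m i j = mat m m (\<lambda>(k,l). if k = i \<and> l = j then 1 else 0)"

definition elem_gens :: "nat \<Rightarrow> 'a::comm_ring_1 mat set" where
  "elem_gens n = {1\<^sub>m n + c \<cdot>\<^sub>m emat n i j | i j c. i < n \<and> j < n \<and> i \<noteq> j}"

definition En :: "nat \<Rightarrow> 'a::comm_ring_1 mat set" where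
  "En n = gen_group n (elem_gens n)"

(* the involution \<partial> = (1 n+1)...(n 2n), 0-indexed on {0..<2n} *)
definition hpart :: "nat \<Rightarrow> nat \<Rightarrow> nat" where
  "hpart n k = (if k < n then k + n else k - n)"

definition eo_gens :: "nat \<Rightarrow> 'a::comm_ring_1 mat set" where
  "eo_gens n = {1\<^sub>m (2*n) + c \<cdot>\<^sub>m (emat (2*n) i j - emat (2*n) (hpart n j) (hpart n i))
               | i j c. i < 2*n \<and> j < 2*n \<and> i \<noteq> j}"

definition EO :: "nat \<Rightarrow> 'a::comm_ring_1 mat set" where
  "EO n = gen_group (2*n) (eo_gens n)"

definition Um :: "nat \<Rightarrow> 'a::comm_ring_1 vec set" where
  "Um n = {v \<in> carrier_vec n. \<exists>w \<in> carrier_vec n. v \<bullet> w = 1}"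

definition E_orbit :: "nat \<Rightarrow> 'a::comm_ring_1 vec \<Rightarrow> 'a vec set" where
  "E_orbit n v = {rowmul v \<epsilon> | \<epsilon>. \<epsilon> \<in> En n}"

(* elements (v,w) of H(R^n) are coordinate vectors v @ w of length 2n in the basis
   e_1..e_n,f_1..f_n; quadratic form q(v,w) = v . w *)
definition qform :: "nat \<Rightarrow> 'a::comm_ring_1 vec \<Rightarrow> 'a" where
  "qform n u = (\<Sum>i<n. u $ i * u $ (n + i))"

definition USph :: "nat \<Rightarrow> 'a::comm_ring_1 vec set" where
  "USph n = {v @\<^sub>v w | v w. v \<in> carrier_vec n \<and> w \<in> carrier_vec n \<and> v \<bullet> w = 1}"

definition EO_orbit :: "nat \<Rightarrow> 'a::comm_ring_1 vec \<Rightarrow> 'a vec set" where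
  "EO_orbit n p = {M *\<^sub>v p | M. M \<in> EO n}"

section \<open>Clifford algebra of (H(R^n), q) as the free algebra modulo the Clifford ideal\<close>

(* noncommutative polynomials in the generators 0..<2n (= e_1..e_n,f_1..f_n):
   coefficient functions on words *)
type_synonym 'a fa = "nat list \<Rightarrow> 'a"

definition fa_free :: "nat \<Rightarrow> 'a::comm_ring_1 fa set" where
  "fa_free n = {p. finite {w. p w \<noteq> 0} \<and> (\<forall>w. p w \<noteq> 0 \<longrightarrow> (\<forall>k \<in> set w. k < 2*n))}"

definition fa_mult :: "'a::comm_ring_1 fa \<Rightarrow> 'a fa \<Rightarrow> 'a fa" (infixl \<open>\<otimes>\<^sub>f\<close> 70) where
  "fa_mult p q = (\<lambda>w. \<Sum>i\<le>length w. p (take i w) * q (drop i w))"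

definition fa_one :: "'a::comm_ring_1 fa" where
  "fa_one = (\<lambda>w. if w = [] then 1 else 0)"

definition fa_iota :: "nat \<Rightarrow> 'a::comm_ring_1 vec \<Rightarrow> 'a fa" where
  "fa_iota n u = (\<lambda>w. case w of [k] \<Rightarrow> if k < 2*n then u $ k else 0 | _ \<Rightarrow> 0)"

(* reversal of words: induces the canonical involution * of Cl *)
definition fa_star :: "'a::comm_ring_1 fa \<Rightarrow> 'a fa" where
  "fa_star p = (\<lambda>w. p (rev w))"

inductive_set cl_ideal :: "nat \<Rightarrow> 'a::comm_ring_1 fa set" for n :: nat where
  ci_zero: "(\<lambda>w. 0) \<in> cl_ideal n"
| ci_add: "a \<in> cl_ideal n \<Longrightarrow> b \<in> cl_ideal n \<Longrightarrow> (\<lambda>w. a w + b w) \<in> cl_ideal n"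
| ci_gen: "a \<in> fa_free n \<Longrightarrow> b \<in> fa_free n \<Longrightarrow> u \<in> carrier_vec (2*n) \<Longrightarrow>
     a \<otimes>\<^sub>f (\<lambda>w. (fa_iota n u \<otimes>\<^sub>f fa_iota n u) w - qform n u * fa_one w) \<otimes>\<^sub>f b \<in> cl_ideal n"

definition cl_eq :: "nat \<Rightarrow> 'a::comm_ring_1 fa \<Rightarrow> 'a fa \<Rightarrow> bool" where
  "cl_eq n x y \<longleftrightarrow> (\<lambda>w. x w - y w) \<in> cl_ideal n"

(* x represents an element of Spin_{2n}(R), with inverse represented by y:
   x \<in> Cl_0 (even representative), x x* = 1, x invertible with x^{-1} = y,
   and x H x^{-1} = H *)
definition spin_rep :: "nat \<Rightarrow> 'a::comm_ring_1 fa \<Rightarrow> 'a fa \<Rightarrow> bool" where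
  "spin_rep n x y \<longleftrightarrow>
     x \<in> fa_free n \<and> y \<in> fa_free n \<and>
     (\<forall>w. x w \<noteq> 0 \<longrightarrow> even (length w)) \<and>
     cl_eq n (x \<otimes>\<^sub>f fa_star x) fa_one \<and>
     cl_eq n (x \<otimes>\<^sub>f y) fa_one \<and> cl_eq n (y \<otimes>\<^sub>f x) fa_one \<and>
     (\<forall>u \<in> carrier_vec (2*n). \<exists>u' \<in> carrier_vec (2*n).
         cl_eq n (x \<otimes>\<^sub>f fa_iota n u \<otimes>\<^sub>f y) (fa_iota n u')) \<and>
     (\<forall>u' \<in> carrier_vec (2*n). \<exists>u \<in> carrier_vec (2*n).
         cl_eq n (x \<otimes>\<^sub>f fa_iota n u \<otimes>\<^sub>f y) (fa_iota n u'))"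

(* x (with inverse y) lies in Epin_{2n}(R) and M is the matrix of \<pi>(x) *)
definition epin_mat :: "nat \<Rightarrow> 'a::comm_ring_1 fa \<Rightarrow> 'a fa \<Rightarrow> 'a mat \<Rightarrow> bool" where
  "epin_mat n x y M \<longleftrightarrow> spin_rep n x y \<and> M \<in> carrier_mat (2*n) (2*n) \<and> M \<in> EO n \<and>
     (\<forall>u \<in> carrier_vec (2*n). cl_eq n (x \<otimes>\<^sub>f fa_iota n u \<otimes>\<^sub>f y) (fa_iota n (M *\<^sub>v u)))"

definition Epin_orbit :: "nat \<Rightarrow> 'a::comm_ring_1 vec \<Rightarrow> 'a vec set" where
  "Epin_orbit n p = {M *\<^sub>v p | M. \<exists>x y. epin_mat n x y M}"

end

theory Submission
  imports Defs
begin

definition fshift :: "'a fa \<Rightarrow> nat \<Rightarrow> 'a fa" where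
  "fshift p a = (\<lambda>u. p (a # u))"

lemma fa_mult_Nil: "(p \<otimes>\<^sub>f q) [] = p [] * (q [] :: 'a::comm_ring_1)"
  by (simp add: fa_mult_def)

lemma fa_mult_Cons: "(p \<otimes>\<^sub>f q) (a # w) = p [] * q (a # w) + (fshift p a \<otimes>\<^sub>f q) (w :: nat list)"
  for p q :: "'a::comm_ring_1 fa"
  unfolding fa_mult_def fshift_def
  by (simp add: sum.atMost_Suc_shift del: sum.atMost_Suc)

lemma fa_mult_left_lin:
  "((\<lambda>u. c * f u + g u) \<otimes>\<^sub>f r) w = c * (f \<otimes>\<^sub>f r) w + (g \<otimes>\<^sub>f r) w"
  for f g r :: "'a::comm_ring_1 fa"
  unfolding fa_mult_def by (simp add: sum.distrib sum_distrib_left algebra_simps)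

lemma fshift_mult: "fshift (p \<otimes>\<^sub>f q) a = (\<lambda>u. p [] * fshift q a u + (fshift p a \<otimes>\<^sub>f q) u)"
  for p q :: "'a::comm_ring_1 fa"
  by (rule ext) (simp add: fshift_def fa_mult_Cons)

lemma fa_mult_assoc_pt: "((p \<otimes>\<^sub>f q) \<otimes>\<^sub>f r) w = (p \<otimes>\<^sub>f (q \<otimes>\<^sub>f r)) w"
  for p q r :: "'a::comm_ring_1 fa"
proof (induction w arbitrary: p q)
  case Nil
  then show ?case by (simp add: fa_mult_Nil)
next
  case (Cons a w)
  have "((p \<otimes>\<^sub>f q) \<otimes>\<^sub>f r) (a # w) = p [] * q [] * r (a # w) + (p [] * (fshift q a \<otimes>\<^sub>f r) w
     + ((fshift p a \<otimes>\<^sub>f q) \<otimes>\<^sub>f r) w)"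
    by (simp add: fa_mult_Cons fa_mult_Nil fshift_mult fa_mult_left_lin[where g="fshift p a \<otimes>\<^sub>f q"])
  also have "\<dots> = (p \<otimes>\<^sub>f (q \<otimes>\<^sub>f r)) (a # w)"
    using Cons.IH by (simp add: fa_mult_Cons fa_mult_Nil algebra_simps)
  finally show ?case .
qed

lemma fa_mult_assoc: "(p \<otimes>\<^sub>f q) \<otimes>\<^sub>f r = p \<otimes>\<^sub>f (q \<otimes>\<^sub>f r)"
  for p q r :: "'a::comm_ring_1 fa"
  by (rule ext) (rule fa_mult_assoc_pt)

lemma fa_mult_distL: "(\<lambda>w. p w + q w) \<otimes>\<^sub>f r = (\<lambda>w. (p \<otimes>\<^sub>f r) w + (q \<otimes>\<^sub>f r) w)"
  for p q r :: "'a::comm_ring_1 fa"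
  unfolding fa_mult_def by (rule ext) (simp add: sum.distrib algebra_simps)

lemma fa_mult_distR: "r \<otimes>\<^sub>f (\<lambda>w. p w + q w) = (\<lambda>w. (r \<otimes>\<^sub>f p) w + (r \<otimes>\<^sub>f q) w)"
  for p q r :: "'a::comm_ring_1 fa"
  unfolding fa_mult_def by (rule ext) (simp add: sum.distrib algebra_simps)

lemma fa_mult_negL: "(\<lambda>w. - p w) \<otimes>\<^sub>f r = (\<lambda>w. - (p \<otimes>\<^sub>f r) w)"
  for p r :: "'a::comm_ring_1 fa"
  unfolding fa_mult_def by (rule ext) (simp add: sum_negf)

lemma fa_mult_negR: "r \<otimes>\<^sub>f (\<lambda>w. - p w) = (\<lambda>w. - (r \<otimes>\<^sub>f p) w)"
  for p r :: "'a::comm_ring_1 fa"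
  unfolding fa_mult_def by (rule ext) (simp add: sum_negf)

lemma fa_mult_zeroL: "(\<lambda>w. 0) \<otimes>\<^sub>f r = (\<lambda>w. 0 :: 'a::comm_ring_1)"
  unfolding fa_mult_def by simp
lemma fa_mult_zeroR: "r \<otimes>\<^sub>f (\<lambda>w. 0) = (\<lambda>w. 0 :: 'a::comm_ring_1)"
  unfolding fa_mult_def by simp

lemma fa_one_mult: "fa_one \<otimes>\<^sub>f p = (p :: 'a::comm_ring_1 fa)"
proof (rule ext)
  fix w show "(fa_one \<otimes>\<^sub>f p) w = p w"
    unfolding fa_mult_def fa_one_def
    by (subst sum.remove[of _ 0]) auto
qed

lemma fa_mult_one: "p \<otimes>\<^sub>f fa_one = (p :: 'a::comm_ring_1 fa)"
proof (rule ext)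
  fix w show "(p \<otimes>\<^sub>f fa_one) w = p w"
    unfolding fa_mult_def fa_one_def
    by (subst sum.remove[of _ "length w"]) auto
qed

lemma fa_star_mult: "fa_star (p \<otimes>\<^sub>f q) = fa_star q \<otimes>\<^sub>f fa_star p"
  for p q :: "'a::comm_ring_1 fa"
proof (rule ext)
  fix w :: "nat list"
  have "fa_star (p \<otimes>\<^sub>f q) w = (\<Sum>i\<le>length w. p (rev (drop (length w - i) w)) * q (rev (take (length w - i) w)))"
    unfolding fa_star_def fa_mult_def by (simp add: take_rev drop_rev)
  also have "\<dots> = (\<Sum>i\<le>length w. p (rev (drop i w)) * q (rev (take i w)))"
    by (rule sum.reindex_bij_witness[of _ "\<lambda>i. length w - i" "\<lambda>i. length w - i"]) auto
  also have "\<dots> = (fa_star q \<otimes>\<^sub>f fa_star p) w"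
    unfolding fa_star_def fa_mult_def by (simp add: mult.commute)
  finally show "fa_star (p \<otimes>\<^sub>f q) w = (fa_star q \<otimes>\<^sub>f fa_star p) w" .
qed


typedef 'a FA = "UNIV :: (nat list \<Rightarrow> 'a) set" by auto

lemmas FA_eqI = Rep_FA_inject[THEN iffD1]

instantiation FA :: (comm_ring_1) ring_1
begin
definition "zero_FA = Abs_FA (\<lambda>w. 0)"
definition "one_FA = Abs_FA fa_one"
definition "plus_FA x y = Abs_FA (\<lambda>w. Rep_FA x w + Rep_FA y w)"
definition "minus_FA x y = Abs_FA (\<lambda>w. Rep_FA x w - Rep_FA y w)"
definition "uminus_FA x = Abs_FA (\<lambda>w. - Rep_FA x w)"
definition "times_FA x y = Abs_FA (Rep_FA x \<otimes>\<^sub>f Rep_FA y)"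

lemma Rep_FA_ops:
  "Rep_FA (0::'a FA) = (\<lambda>w. 0)"
  "Rep_FA (1::'a FA) = fa_one"
  "Rep_FA (x + y) = (\<lambda>w. Rep_FA x w + Rep_FA y w)"
  "Rep_FA (x - y) = (\<lambda>w. Rep_FA x w - Rep_FA y w)"
  "Rep_FA (- x) = (\<lambda>w. - Rep_FA x w)"
  "Rep_FA (x * y) = Rep_FA x \<otimes>\<^sub>f Rep_FA y"
  by (simp_all add: zero_FA_def one_FA_def plus_FA_def minus_FA_def uminus_FA_def times_FA_def Abs_FA_inverse)

lemma FA_zero_neq_one: "(0::'a FA) \<noteq> 1"
proof
  assume "(0::'a FA) = 1"
  then have "Rep_FA (0::'a FA) [] = Rep_FA (1::'a FA) []" by simp
  then show False by (simp add: Rep_FA_ops fa_one_def)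
qed

instance
  by (standard; (rule FA_zero_neq_one | (rule FA_eqI; simp add: Rep_FA_ops fa_mult_assoc fa_one_mult fa_mult_one fa_mult_distL fa_mult_distR
   fa_mult_zeroL fa_mult_zeroR algebra_simps)))
end

definition sc :: "'a::comm_ring_1 \<Rightarrow> 'a FA" where
  "sc c = Abs_FA (\<lambda>w. if w = [] then c else 0)"

lemma Rep_sc: "Rep_FA (sc c) = (\<lambda>w. if w = [] then c else 0)"
  by (simp add: sc_def Abs_FA_inverse)

lemma Rep_sc_mult: "Rep_FA (sc c * x) = (\<lambda>w. c * Rep_FA x w)"
proof (rule ext)
  fix w show "Rep_FA (sc c * x) w = c * Rep_FA x w"
    unfolding Rep_FA_ops Rep_sc fa_mult_def
    by (subst sum.remove[of _ 0]) auto
qed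

lemma Rep_mult_sc: "Rep_FA (x * sc c) = (\<lambda>w. c * Rep_FA x w)"
proof (rule ext)
  fix w show "Rep_FA (x * sc c) w = c * Rep_FA x w"
    unfolding Rep_FA_ops Rep_sc fa_mult_def
    by (subst sum.remove[of _ "length w"]) (auto simp: mult.commute)
qed

lemma sc_comm: "x * sc c = sc c * x"
  by (rule FA_eqI) (simp add: Rep_sc_mult Rep_mult_sc)

lemma sc_comm2: "x * (sc c * y) = sc c * (x * y)"
  by (metis mult.assoc sc_comm)

lemma sc_mult: "sc c * sc d = sc (c * d)"
  by (rule FA_eqI) (auto simp: Rep_sc_mult Rep_sc)

lemma sc_mult2: "sc c * (sc d * x) = sc (c * d) * x"
  by (metis mult.assoc sc_mult)

lemma sc_add: "sc (c + d) = sc c + sc d"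
  by (rule FA_eqI) (auto simp: Rep_FA_ops Rep_sc)

lemma sc_diff: "sc (c - d) = sc c - sc d"
  by (rule FA_eqI) (auto simp: Rep_FA_ops Rep_sc)

lemma sc_neg: "sc (- c) = - sc c"
  by (rule FA_eqI) (auto simp: Rep_FA_ops Rep_sc)

lemma sc_one: "sc 1 = 1"
  by (rule FA_eqI) (auto simp: Rep_FA_ops Rep_sc fa_one_def)

lemma sc_zero: "sc 0 = 0"
  by (rule FA_eqI) (auto simp: Rep_FA_ops Rep_sc)

definition star :: "'a::comm_ring_1 FA \<Rightarrow> 'a FA" where
  "star x = Abs_FA (fa_star (Rep_FA x))"

lemma Rep_star: "Rep_FA (star x) = fa_star (Rep_FA x)"
  by (simp add: star_def Abs_FA_inverse)

lemma star_mult: "star (x * y) = star y * star x"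
  by (rule FA_eqI) (simp add: Rep_star Rep_FA_ops fa_star_mult)

lemma star_add: "star (x + y) = star x + star y"
  by (rule FA_eqI) (simp add: Rep_star Rep_FA_ops fa_star_def)

lemma star_diff: "star (x - y) = star x - star y"
  by (rule FA_eqI) (simp add: Rep_star Rep_FA_ops fa_star_def)

lemma star_one: "star 1 = 1"
  by (rule FA_eqI) (simp add: Rep_star Rep_FA_ops fa_star_def fa_one_def)

lemma star_sc: "star (sc c) = sc c"
  by (rule FA_eqI) (simp add: Rep_star Rep_sc fa_star_def)

definition iota :: "nat \<Rightarrow> 'a::comm_ring_1 vec \<Rightarrow> 'a FA" where
  "iota n u = Abs_FA (fa_iota n u)"

lemma Rep_iota: "Rep_FA (iota n u) = fa_iota n u"
  by (simp add: iota_def Abs_FA_inverse)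

lemma star_iota: "star (iota n u) = iota n u"
proof (rule FA_eqI, rule ext)
  fix w show "Rep_FA (star (iota n u)) w = Rep_FA (iota n u) w"
    by (simp add: Rep_star Rep_iota fa_star_def fa_iota_def split: list.splits)
qed

lemma iota_add: "u \<in> carrier_vec (2*n) \<Longrightarrow> v \<in> carrier_vec (2*n) \<Longrightarrow> iota n (u + v) = iota n u + iota n v"
  by (rule FA_eqI, rule ext) (simp add: Rep_iota Rep_FA_ops fa_iota_def split: list.splits)

lemma iota_smult: "u \<in> carrier_vec (2*n) \<Longrightarrow> iota n (c \<cdot>\<^sub>v u) = sc c * iota n u"
  by (rule FA_eqI, rule ext) (simp add: Rep_iota Rep_sc_mult fa_iota_def split: list.splits)

lemma Rep_iota_mult: "Rep_FA (iota n u * x) w =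
   (case w of [] \<Rightarrow> 0 | k # w' \<Rightarrow> (if k < 2*n then u $ k else 0) * Rep_FA x w')"
proof (cases w)
  case Nil then show ?thesis by (simp add: Rep_FA_ops Rep_iota fa_mult_Nil fa_iota_def)
next
  case (Cons k w')
  have "fshift (fa_iota n u) k = (\<lambda>v. (if k < 2*n then u $ k else 0) * fa_one v)"
    by (rule ext) (simp add: fshift_def fa_iota_def fa_one_def split: list.splits)
  moreover have "((\<lambda>v. c * fa_one v) \<otimes>\<^sub>f q) w' = c * q w'" for c and q :: "'a fa"
    unfolding fa_mult_def fa_one_def by (subst sum.remove[of _ 0]) auto
  ultimately show ?thesis using Cons
    by (simp add: Rep_FA_ops Rep_iota fa_mult_Cons fa_iota_def)
qed


definition Fr :: "nat \<Rightarrow> 'a::comm_ring_1 FA set" where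
  "Fr n = {x. Rep_FA x \<in> fa_free n}"

definition Jd :: "nat \<Rightarrow> 'a::comm_ring_1 FA set" where
  "Jd n = {x. Rep_FA x \<in> cl_ideal n}"

definition ceq :: "nat \<Rightarrow> 'a::comm_ring_1 FA \<Rightarrow> 'a FA \<Rightarrow> bool" where
  "ceq n x y \<longleftrightarrow> x - y \<in> Jd n"

lemma cl_eq_ceq: "cl_eq n (Rep_FA x) (Rep_FA y) \<longleftrightarrow> ceq n x y"
  by (simp add: cl_eq_def ceq_def Jd_def Rep_FA_ops)

lemma fa_free_mult:
  assumes "p \<in> fa_free n" "q \<in> fa_free n"
  shows "p \<otimes>\<^sub>f q \<in> fa_free n"
proof -
  have sub: "{w. (p \<otimes>\<^sub>f q) w \<noteq> 0} \<subseteq> (\<lambda>(a,b). a @ b) ` ({w. p w \<noteq> 0} \<times> {w. q w \<noteq> 0})"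
  proof
    fix w assume "w \<in> {w. (p \<otimes>\<^sub>f q) w \<noteq> 0}"
    then have "(\<Sum>i\<le>length w. p (take i w) * q (drop i w)) \<noteq> 0" by (simp add: fa_mult_def)
    then obtain i where "p (take i w) * q (drop i w) \<noteq> 0"
      using sum.not_neutral_contains_not_neutral by blast
    then have "p (take i w) \<noteq> 0" "q (drop i w) \<noteq> 0" by auto
    then show "w \<in> (\<lambda>(a,b). a @ b) ` ({w. p w \<noteq> 0} \<times> {w. q w \<noteq> 0})"
      by (intro image_eqI[of _ _ "(take i w, drop i w)"]) auto
  qed
  have "finite {w. (p \<otimes>\<^sub>f q) w \<noteq> 0}"
    using assms by (intro finite_subset[OF sub]) (auto simp: fa_free_def)
  moreover have "\<forall>k\<in>set w. k < 2*n" if "(p \<otimes>\<^sub>f q) w \<noteq> 0" for w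
  proof -
    from that have "(\<Sum>i\<le>length w. p (take i w) * q (drop i w)) \<noteq> 0" by (simp add: fa_mult_def)
    then obtain i where "p (take i w) * q (drop i w) \<noteq> 0"
      using sum.not_neutral_contains_not_neutral by blast
    then have "p (take i w) \<noteq> 0" "q (drop i w) \<noteq> 0" by auto
    then have "\<forall>k\<in>set (take i w). k < 2*n" "\<forall>k\<in>set (drop i w). k < 2*n"
      using assms by (auto simp: fa_free_def)
    moreover have "set w = set (take i w) \<union> set (drop i w)"
      by (metis append_take_drop_id set_append)
    ultimately show ?thesis by blast
  qed
  ultimately show ?thesis by (simp add: fa_free_def)
qed

lemma Fr_mult[intro]: "x \<in> Fr n \<Longrightarrow> y \<in> Fr n \<Longrightarrow> x * y \<in> Fr n"
  by (simp add: Fr_def Rep_FA_ops fa_free_mult)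

lemma Fr_add[intro]: "x \<in> Fr n \<Longrightarrow> y \<in> Fr n \<Longrightarrow> x + y \<in> Fr n"
proof -
  assume a: "x \<in> Fr n" "y \<in> Fr n"
  have "{w. Rep_FA x w + Rep_FA y w \<noteq> 0} \<subseteq> {w. Rep_FA x w \<noteq> 0} \<union> {w. Rep_FA y w \<noteq> 0}" by auto
  moreover have "finite ({w. Rep_FA x w \<noteq> 0} \<union> {w. Rep_FA y w \<noteq> 0})"
    using a by (simp add: Fr_def fa_free_def)
  ultimately have "finite {w. Rep_FA x w + Rep_FA y w \<noteq> 0}" by (rule finite_subset)
  moreover have "\<forall>k\<in>set w. k < 2*n" if "Rep_FA x w + Rep_FA y w \<noteq> 0" for w
  proof -
    from that have "Rep_FA x w \<noteq> 0 \<or> Rep_FA y w \<noteq> 0" by auto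
    then show ?thesis using a by (auto simp: Fr_def fa_free_def)
  qed
  ultimately show ?thesis by (simp add: Fr_def fa_free_def Rep_FA_ops)
qed

lemma Fr_neg[intro]: "x \<in> Fr n \<Longrightarrow> - x \<in> Fr n"
  by (simp add: Fr_def fa_free_def Rep_FA_ops)

lemma Fr_diff[intro]: "x \<in> Fr n \<Longrightarrow> y \<in> Fr n \<Longrightarrow> x - y \<in> Fr n"
  by (metis Fr_add Fr_neg diff_conv_add_uminus)

lemma Fr_sc[intro]: "sc c \<in> Fr n"
proof -
  have "{w. Rep_FA (sc c) w \<noteq> 0} \<subseteq> {[]}" by (auto simp: Rep_sc)
  then show ?thesis unfolding Fr_def fa_free_def by (auto intro: finite_subset simp: Rep_sc)
qed

lemma Fr_one[intro]: "1 \<in> Fr n"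
  by (metis Fr_sc sc_one)

lemma Fr_zero[intro]: "0 \<in> Fr n"
  by (metis Fr_sc sc_zero)

lemma Fr_iota[intro]: "iota n u \<in> Fr n"
proof -
  have "{w. Rep_FA (iota n u) w \<noteq> 0} \<subseteq> (\<lambda>k. [k]) ` {..<2*n}"
  proof
    fix w assume "w \<in> {w. Rep_FA (iota n u) w \<noteq> 0}"
    then show "w \<in> (\<lambda>k. [k]) ` {..<2*n}"
      by (cases w) (auto simp: Rep_iota fa_iota_def split: list.splits if_splits)
  qed
  moreover have "\<forall>k\<in>set w. k < 2*n" if "Rep_FA (iota n u) w \<noteq> 0" for w
    using that by (cases w) (auto simp: Rep_iota fa_iota_def split: list.splits if_splits)
  ultimately show ?thesis unfolding Fr_def fa_free_def
    by (auto intro: finite_subset)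
qed

lemma cl_ideal_multL: "p \<in> cl_ideal n \<Longrightarrow> c \<in> fa_free n \<Longrightarrow> c \<otimes>\<^sub>f p \<in> cl_ideal n"
proof (induction p rule: cl_ideal.induct)
  case ci_zero then show ?case by (simp add: fa_mult_zeroR cl_ideal.ci_zero)
next
  case (ci_add a b) then show ?case by (simp add: fa_mult_distR cl_ideal.ci_add)
next
  case (ci_gen a b u)
  have "c \<otimes>\<^sub>f a \<in> fa_free n" using ci_gen fa_free_mult by blast
  then have "(c \<otimes>\<^sub>f a) \<otimes>\<^sub>f (\<lambda>w. (fa_iota n u \<otimes>\<^sub>f fa_iota n u) w - qform n u * fa_one w) \<otimes>\<^sub>f b \<in> cl_ideal n"
    using ci_gen by (intro cl_ideal.ci_gen) auto
  then show ?case by (simp add: fa_mult_assoc)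
qed

lemma cl_ideal_multR: "p \<in> cl_ideal n \<Longrightarrow> c \<in> fa_free n \<Longrightarrow> p \<otimes>\<^sub>f c \<in> cl_ideal n"
proof (induction p rule: cl_ideal.induct)
  case ci_zero then show ?case by (simp add: fa_mult_zeroL cl_ideal.ci_zero)
next
  case (ci_add a b) then show ?case by (simp add: fa_mult_distL cl_ideal.ci_add)
next
  case (ci_gen a b u)
  have "b \<otimes>\<^sub>f c \<in> fa_free n" using ci_gen fa_free_mult by blast
  then have "a \<otimes>\<^sub>f (\<lambda>w. (fa_iota n u \<otimes>\<^sub>f fa_iota n u) w - qform n u * fa_one w) \<otimes>\<^sub>f (b \<otimes>\<^sub>f c) \<in> cl_ideal n"
    using ci_gen by (intro cl_ideal.ci_gen) auto
  then show ?case by (simp add: fa_mult_assoc)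
qed

lemma Jd_zero[intro]: "0 \<in> Jd n"
  by (simp add: Jd_def Rep_FA_ops cl_ideal.ci_zero)

lemma Jd_add[intro]: "x \<in> Jd n \<Longrightarrow> y \<in> Jd n \<Longrightarrow> x + y \<in> Jd n"
  by (simp add: Jd_def Rep_FA_ops cl_ideal.ci_add)

lemma Jd_multL[intro]: "c \<in> Fr n \<Longrightarrow> x \<in> Jd n \<Longrightarrow> c * x \<in> Jd n"
  by (simp add: Jd_def Fr_def Rep_FA_ops cl_ideal_multL)

lemma Jd_multR[intro]: "x \<in> Jd n \<Longrightarrow> c \<in> Fr n \<Longrightarrow> x * c \<in> Jd n"
  by (simp add: Jd_def Fr_def Rep_FA_ops cl_ideal_multR)

lemma Jd_neg[intro]: "x \<in> Jd n \<Longrightarrow> - x \<in> Jd n"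
proof -
  assume "x \<in> Jd n"
  then have "(- 1) * x \<in> Jd n" using Fr_neg[OF Fr_one] by blast
  then show ?thesis by simp
qed

lemma Jd_diff[intro]: "x \<in> Jd n \<Longrightarrow> y \<in> Jd n \<Longrightarrow> x - y \<in> Jd n"
  by (metis Jd_add Jd_neg diff_conv_add_uminus)

lemma Jd_sq: assumes "u \<in> carrier_vec (2*n)"
  shows "iota n u * iota n u - sc (qform n u) \<in> Jd n"
proof -
  have "(\<lambda>w. (fa_iota n u \<otimes>\<^sub>f fa_iota n u) w - qform n u * fa_one w) = Rep_FA (iota n u * iota n u - sc (qform n u))"
    by (rule ext) (simp add: Rep_FA_ops Rep_iota Rep_sc fa_one_def)
  moreover have "fa_one \<otimes>\<^sub>f (\<lambda>w. (fa_iota n u \<otimes>\<^sub>f fa_iota n u) w - qform n u * fa_one w) \<otimes>\<^sub>f fa_one \<in> cl_ideal n"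
    by (rule cl_ideal.ci_gen) (use assms Fr_one in \<open>auto simp: Fr_def Rep_FA_ops\<close>)
  ultimately show ?thesis by (simp add: Jd_def fa_one_mult fa_mult_one)
qed

definition bil :: "nat \<Rightarrow> 'a::comm_ring_1 vec \<Rightarrow> 'a vec \<Rightarrow> 'a" where
  "bil n u v = qform n (u + v) - qform n u - qform n v"

lemma Jd_pol: assumes "u \<in> carrier_vec (2*n)" "v \<in> carrier_vec (2*n)"
  shows "iota n u * iota n v + iota n v * iota n u - sc (bil n u v) \<in> Jd n"
proof -
  have uv: "u + v \<in> carrier_vec (2*n)" using assms by auto
  have "(iota n (u+v) * iota n (u+v) - sc (qform n (u+v))) - (iota n u * iota n u - sc (qform n u))
     - (iota n v * iota n v - sc (qform n v)) \<in> Jd n"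
    using Jd_sq[OF assms(1)] Jd_sq[OF assms(2)] Jd_sq[OF uv] by blast
  moreover have "(iota n (u+v) * iota n (u+v) - sc (qform n (u+v))) - (iota n u * iota n u - sc (qform n u))
     - (iota n v * iota n v - sc (qform n v)) = iota n u * iota n v + iota n v * iota n u - sc (bil n u v)"
    by (simp add: iota_add[OF assms] bil_def sc_diff sc_add algebra_simps)
  ultimately show ?thesis by simp
qed

lemma ceq_refl: "ceq n x x"
  by (simp add: ceq_def Jd_zero)

lemma ceq_sym: "ceq n x y \<Longrightarrow> ceq n y x"
  unfolding ceq_def by (metis Jd_neg minus_diff_eq)

lemma ceq_trans: "ceq n x y \<Longrightarrow> ceq n y z \<Longrightarrow> ceq n x z"
  unfolding ceq_def by (metis Jd_add diff_add_cancel add_diff_eq)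

lemma ceq_multL: "c \<in> Fr n \<Longrightarrow> ceq n x y \<Longrightarrow> ceq n (c * x) (c * y)"
  unfolding ceq_def by (metis Jd_multL right_diff_distrib)

lemma ceq_multR: "c \<in> Fr n \<Longrightarrow> ceq n x y \<Longrightarrow> ceq n (x * c) (y * c)"
  unfolding ceq_def by (metis Jd_multR left_diff_distrib)

lemma ceq_iff_Jd: "ceq n x y \<longleftrightarrow> x - y \<in> Jd n"
  by (simp add: ceq_def)

definition Ev :: "'a::comm_ring_1 FA set" where
  "Ev = {x. \<forall>w. Rep_FA x w \<noteq> 0 \<longrightarrow> even (length w)}"

lemma Ev_mult: "x \<in> Ev \<Longrightarrow> y \<in> Ev \<Longrightarrow> x * y \<in> Ev"
proof -
  assume a: "x \<in> Ev" "y \<in> Ev"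
  show ?thesis unfolding Ev_def
  proof (intro CollectI allI impI)
    fix w assume "Rep_FA (x * y) w \<noteq> 0"
    then have "(\<Sum>i\<le>length w. Rep_FA x (take i w) * Rep_FA y (drop i w)) \<noteq> 0"
      by (simp add: Rep_FA_ops fa_mult_def)
    then obtain i where i: "i \<in> {..length w}" "Rep_FA x (take i w) * Rep_FA y (drop i w) \<noteq> 0"
      using sum.not_neutral_contains_not_neutral by blast
    then have "Rep_FA x (take i w) \<noteq> 0" "Rep_FA y (drop i w) \<noteq> 0" by auto
    then have "even (length (take i w))" "even (length (drop i w))"
      using a unfolding Ev_def by blast+
    then show "even (length w)" by (metis append_take_drop_id length_append even_add)
  qed
qed

lemma Ev_add: "x \<in> Ev \<Longrightarrow> y \<in> Ev \<Longrightarrow> x + y \<in> Ev"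
proof -
  assume a: "x \<in> Ev" "y \<in> Ev"
  { fix w assume "Rep_FA x w + Rep_FA y w \<noteq> 0"
    then have "Rep_FA x w \<noteq> 0 \<or> Rep_FA y w \<noteq> 0" by auto
    then have "even (length w)" using a by (auto simp: Ev_def) }
  then show ?thesis by (simp add: Ev_def Rep_FA_ops)
qed

lemma Ev_diff: "x \<in> Ev \<Longrightarrow> y \<in> Ev \<Longrightarrow> x - y \<in> Ev"
proof -
  assume a: "x \<in> Ev" "y \<in> Ev"
  { fix w assume "Rep_FA x w - Rep_FA y w \<noteq> 0"
    then have "Rep_FA x w \<noteq> 0 \<or> Rep_FA y w \<noteq> 0" by auto
    then have "even (length w)" using a by (auto simp: Ev_def) }
  then show ?thesis by (simp add: Ev_def Rep_FA_ops)
qed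

lemma Ev_sc: "sc c \<in> Ev"
  unfolding Ev_def by (simp add: Rep_sc)

lemma Ev_one: "1 \<in> Ev"
  by (metis Ev_sc sc_one)

lemma Ev_iota2: "iota n u * iota n v \<in> Ev"
  unfolding Ev_def
proof (intro CollectI allI impI)
  fix w assume h: "Rep_FA (iota n u * iota n v) w \<noteq> 0"
  show "even (length w)"
  proof (cases w)
    case Nil then show ?thesis by simp
  next
    case (Cons k w')
    then have "(if k < 2 * n then u $ k else 0) * Rep_FA (iota n v) w' \<noteq> 0" using h by (simp add: Rep_iota_mult)
    then have "Rep_FA (iota n v) w' \<noteq> 0" by (metis mult_zero_right)
    then obtain l where "w' = [l]" by (auto simp: Rep_iota fa_iota_def split: list.splits)
    then show ?thesis using Cons by simp
  qed
qed


inductive_set rm :: "nat \<Rightarrow> 'a::comm_ring_1 mat set \<Rightarrow> 'a mat set"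
  for m :: nat and S :: "'a mat set" where
  rm_one: "1\<^sub>m m \<in> rm m S"
| rm_mult: "A \<in> rm m S \<Longrightarrow> s \<in> S \<Longrightarrow> A * s \<in> rm m S"

definition ginv :: "nat \<Rightarrow> 'a::comm_ring_1 mat set \<Rightarrow> bool" where
  "ginv m S \<longleftrightarrow> S \<subseteq> carrier_mat m m \<and> (\<forall>s\<in>S. \<exists>s'\<in>S. s * s' = 1\<^sub>m m \<and> s' * s = 1\<^sub>m m)"

lemma rm_carrier: assumes g: "ginv m S" and A: "A \<in> rm m S" shows "A \<in> carrier_mat m m"
  using A by (induction A rule: rm.induct) (use g in \<open>auto simp: ginv_def\<close>)

lemma rm_mult_closed: assumes g: "ginv m S" and A: "A \<in> rm m S" and B: "B \<in> rm m S"
  shows "A * B \<in> rm m S"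
  using B
proof (induction B rule: rm.induct)
  case rm_one then show ?case using rm_carrier[OF g A] A by simp
next
  case (rm_mult B s)
  have cs: "s \<in> carrier_mat m m" using rm_mult.hyps(2) g by (auto simp: ginv_def)
  have eq: "A * (B * s) = (A * B) * s"
    using rm_carrier[OF g A] rm_carrier[OF g rm_mult.hyps(1)] cs
    by (intro assoc_mult_mat[symmetric, of _ m m _ m _ m]) auto
  show ?case unfolding eq by (rule rm.rm_mult[OF rm_mult.IH rm_mult.hyps(2)])
qed

lemma rm_inv: assumes g: "ginv m S" and A: "A \<in> rm m S"
  shows "\<exists>A'\<in>rm m S. A * A' = 1\<^sub>m m \<and> A' * A = 1\<^sub>m m"
  using A
proof (induction A rule: rm.induct)
  case rm_one then show ?case by (intro bexI[of _ "1\<^sub>m m"]) (auto intro: rm.rm_one)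
next
  case (rm_mult A s)
  from rm_mult.IH obtain A' where A': "A' \<in> rm m S" "A * A' = 1\<^sub>m m" "A' * A = 1\<^sub>m m" by blast
  from g rm_mult.hyps(2) obtain s' where s': "s' \<in> S" "s * s' = 1\<^sub>m m" "s' * s = 1\<^sub>m m"
    unfolding ginv_def by blast
  have cA: "A \<in> carrier_mat m m" "A' \<in> carrier_mat m m" using rm_carrier[OF g] rm_mult.hyps(1) A' by auto
  have cs: "s \<in> carrier_mat m m" "s' \<in> carrier_mat m m" using g s' rm_mult.hyps(2) by (auto simp: ginv_def)
  have s'rm: "s' \<in> rm m S" using rm.rm_mult[OF rm.rm_one[of m S] s'(1)] cs by (metis left_mult_one_mat)
  have "s' * A' \<in> rm m S" by (rule rm_mult_closed[OF g s'rm A'(1)])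
  moreover have "A * s * (s' * A') = 1\<^sub>m m"
  proof -
    have "A * s * (s' * A') = A * (s * (s' * A'))"
      using cA cs by (intro assoc_mult_mat[of _ m m _ m _ m]) auto
    also have "s * (s' * A') = (s * s') * A'"
      using cA cs by (intro assoc_mult_mat[symmetric, of _ m m _ m _ m]) auto
    also have "A * ((s * s') * A') = 1\<^sub>m m" using s' A' cA by simp
    finally show ?thesis .
  qed
  moreover have "s' * A' * (A * s) = 1\<^sub>m m"
  proof -
    have "s' * A' * (A * s) = s' * (A' * (A * s))"
      using cA cs by (intro assoc_mult_mat[of _ m m _ m _ m]) auto
    also have "A' * (A * s) = (A' * A) * s"
      using cA cs by (intro assoc_mult_mat[symmetric, of _ m m _ m _ m]) auto
    also have "s' * ((A' * A) * s) = 1\<^sub>m m" using s' A' cs by simp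
    finally show ?thesis .
  qed
  ultimately show ?case by blast
qed

lemma gen_group_rm: assumes g: "ginv m S" shows "gen_group m S = rm m S"
proof
  show "gen_group m S \<subseteq> rm m S"
  proof
    fix A assume "A \<in> gen_group m S"
    then show "A \<in> rm m S"
    proof (induction A rule: gen_group.induct)
      case gg_one then show ?case by (rule rm.rm_one)
    next
      case (gg_mult A s) then show ?case by (simp add: rm.rm_mult)
    next
      case (gg_inv A B)
      from rm_inv[OF g gg_inv.IH] obtain A' where A': "A' \<in> rm m S" "A * A' = 1\<^sub>m m" "A' * A = 1\<^sub>m m" by blast
      have cA: "A \<in> carrier_mat m m" "A' \<in> carrier_mat m m" using rm_carrier[OF g] gg_inv.IH A' by auto
      have "B = (A' * A) * B" using gg_inv.hyps(2) A' by simp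
      also have "\<dots> = A' * (A * B)" using cA gg_inv.hyps(2) by (simp add: assoc_mult_mat)
      also have "\<dots> = A'" using gg_inv.hyps(3) cA by simp
      finally show ?case using A' by simp
    qed
  qed
next
  show "rm m S \<subseteq> gen_group m S"
  proof
    fix A assume "A \<in> rm m S"
    then show "A \<in> gen_group m S"
      by (induction A rule: rm.induct) (auto intro: gen_group.intros)
  qed
qed

lemma gg_carrier: "ginv m S \<Longrightarrow> A \<in> gen_group m S \<Longrightarrow> A \<in> carrier_mat m m"
  using gen_group_rm rm_carrier by blast

lemma gg_mult_closed: "ginv m S \<Longrightarrow> A \<in> gen_group m S \<Longrightarrow> B \<in> gen_group m S \<Longrightarrow> A * B \<in> gen_group m S"
  using gen_group_rm rm_mult_closed by blast

lemma gg_inv_ex: "ginv m S \<Longrightarrow> A \<in> gen_group m S \<Longrightarrow> \<exists>A'\<in>gen_group m S. A * A' = 1\<^sub>m m \<and> A' * A = 1\<^sub>m m"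
  using gen_group_rm rm_inv by blast

lemma gg_gen: "ginv m S \<Longrightarrow> s \<in> S \<Longrightarrow> s \<in> gen_group m S"
  using gen_group.gg_mult[OF gen_group.gg_one[of m S], of s] by (auto simp: ginv_def)

lemma gg_one': "1\<^sub>m m \<in> gen_group m S"
  by (rule gen_group.gg_one)

lemma mat_vec_unit: "A \<in> carrier_mat m m \<Longrightarrow> k < m \<Longrightarrow> l < m \<Longrightarrow> (A *\<^sub>v unit_vec m l) $ k = A $$ (k,l)"
  for A :: "'a::comm_ring_1 mat"
  by (simp add: scalar_prod_right_unit)

lemma mat_eq_action: fixes A B :: "'a::comm_ring_1 mat" assumes A: "A \<in> carrier_mat m m" and B: "B \<in> carrier_mat m m"
  and h: "\<And>u. u \<in> carrier_vec m \<Longrightarrow> A *\<^sub>v u = B *\<^sub>v u"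
  shows "A = B"
proof -
  have "A $$ (k,l) = B $$ (k,l)" if kl: "k < m" "l < m" for k l
  proof -
    have "A *\<^sub>v unit_vec m l = B *\<^sub>v unit_vec m l" by (rule h) simp
    then have "(A *\<^sub>v unit_vec m l) $ k = (B *\<^sub>v unit_vec m l) $ k" by simp
    then show ?thesis using mat_vec_unit[OF A kl] mat_vec_unit[OF B kl] by simp
  qed
  then show ?thesis using A B by (intro eq_matI) auto
qed


definition ub :: "nat \<Rightarrow> nat \<Rightarrow> 'a::comm_ring_1 vec" where
  "ub n k = unit_vec (2*n) k"

definition gm :: "nat \<Rightarrow> nat \<Rightarrow> nat \<Rightarrow> 'a::comm_ring_1 \<Rightarrow> 'a mat" where
  "gm n i j c = 1\<^sub>m (2*n) + c \<cdot>\<^sub>m (emat (2*n) i j - emat (2*n) (hpart n j) (hpart n i))"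

lemma hpart_lt: "k < 2*n \<Longrightarrow> hpart n k < 2*n"
  by (auto simp add: hpart_def)

lemma hpart_hpart: "k < 2*n \<Longrightarrow> hpart n (hpart n k) = k"
  by (auto simp add: hpart_def)

lemma hpart_neq: "k < 2*n \<Longrightarrow> hpart n k \<noteq> k"
  by (auto simp add: hpart_def)

lemma hpart_inj: "k < 2*n \<Longrightarrow> l < 2*n \<Longrightarrow> hpart n k = hpart n l \<longleftrightarrow> k = l"
  by (auto simp: hpart_def)

lemma gm_carrier: "gm n i j c \<in> carrier_mat (2*n) (2*n)"
  unfolding gm_def emat_def by (intro add_carrier_mat smult_carrier_mat minus_carrier_mat) auto

lemma gm_index: "k < 2*n \<Longrightarrow> l < 2*n \<Longrightarrow> gm n i j c $$ (k,l) =
   (if k = l then 1 else 0) + c * ((if k = i \<and> l = j then 1 else 0) - (if k = hpart n j \<and> l = hpart n i then 1 else 0))"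
  by (simp add: gm_def emat_def)


lemma gm_vec_index:
  assumes u: "u \<in> carrier_vec (2*n)" and k: "k < 2*n" and ij: "i < 2*n" "j < 2*n"
  shows "(gm n i j c *\<^sub>v u) $ k = u $ k + c * ((if k = i then u $ j else 0) - (if k = hpart n j then u $ (hpart n i) else 0))"
proof -
  have "(gm n i j c *\<^sub>v u) $ k = (\<Sum>l\<in>{0..<2*n}. gm n i j c $$ (k,l) * u $ l)"
    using u k gm_carrier[of n i j c] by (simp add: scalar_prod_def)
  also have "\<dots> = (\<Sum>l\<in>{0..<2*n}. (if l = k then u $ l else 0) + c * ((if l = j then (if k = i then u $ l else 0) else 0)
       - (if l = hpart n i then (if k = hpart n j then u $ l else 0) else 0)))"
  proof (rule sum.cong)
    fix l assume "l \<in> {0..<2*n}"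
    then have l: "l < 2*n" by simp
    show "gm n i j c $$ (k,l) * u $ l = (if l = k then u $ l else 0) + c * ((if l = j then (if k = i then u $ l else 0) else 0)
       - (if l = hpart n i then (if k = hpart n j then u $ l else 0) else 0))"
      unfolding gm_index[OF k l] by (simp add: algebra_simps)
  qed simp
  also have "\<dots> = u $ k + c * ((if k = i then (if j < 2*n then u $ j else 0) else 0) - (if k = hpart n j then (if hpart n i < 2*n then u $ (hpart n i) else 0) else 0))"
    by (simp add: sum.distrib sum_subtractf sum_distrib_left[symmetric] sum.delta' k)
  finally show ?thesis using ij hpart_lt[of i n] by simp
qed


lemma mat_vec_sum: "A \<in> carrier_mat n n \<Longrightarrow> u \<in> carrier_vec n \<Longrightarrow> k < n \<Longrightarrow>
   (A *\<^sub>v u) $ k = (\<Sum>l\<in>{0..<n}. A $$ (k,l) * u $ l)"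
  for A :: "'a::comm_ring_1 mat"
  by (simp add: scalar_prod_def)

definition en :: "nat \<Rightarrow> nat \<Rightarrow> nat \<Rightarrow> 'a::comm_ring_1 \<Rightarrow> 'a mat" where
  "en n i j c = 1\<^sub>m n + c \<cdot>\<^sub>m emat n i j"

lemma en_carrier[simp]: "en n i j c \<in> carrier_mat n n"
  unfolding en_def emat_def by (intro add_carrier_mat smult_carrier_mat) auto

lemma en_dims[simp]: "dim_row (en n i j c) = n" "dim_col (en n i j c) = n"
  by (simp_all add: en_def emat_def)

lemma en_index: "k < n \<Longrightarrow> l < n \<Longrightarrow> en n i j c $$ (k,l) = (if k = l then 1 else 0) + c * (if k = i \<and> l = j then 1 else 0)"
  by (simp add: en_def emat_def)

lemma en_vec: assumes u: "u \<in> carrier_vec n" and ij: "i < n" "j < n"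
  shows "en n i j c *\<^sub>v u = u + (c * u $ j) \<cdot>\<^sub>v unit_vec n i"
proof (rule eq_vecI)
  fix k assume "k < dim_vec (u + (c * u $ j) \<cdot>\<^sub>v unit_vec n i)"
  then have k: "k < n" using u by simp
  have "(en n i j c *\<^sub>v u) $ k = (\<Sum>l\<in>{0..<n}. en n i j c $$ (k,l) * u $ l)"
    using mat_vec_sum[OF en_carrier u k] .
  also have "\<dots> = (\<Sum>l\<in>{0..<n}. (if l = k then u $ l else 0) + c * (if l = j then (if k = i then u $ l else 0) else 0))"
  proof (rule sum.cong)
    fix l assume "l \<in> {0..<n}" then have l: "l < n" by simp
    show "en n i j c $$ (k,l) * u $ l = (if l = k then u $ l else 0) + c * (if l = j then (if k = i then u $ l else 0) else 0)"
      unfolding en_index[OF k l] by (simp add: algebra_simps)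
  qed simp
  also have "\<dots> = u $ k + c * (if k = i then u $ j else 0)"
    by (simp add: sum.distrib sum_distrib_left[symmetric] sum.delta' k ij)
  finally show "(en n i j c *\<^sub>v u) $ k = (u + (c * u $ j) \<cdot>\<^sub>v unit_vec n i) $ k"
    using u k ij by simp
qed (use u in simp)

lemma en_inv: assumes ij: "i < n" "j < n" "i \<noteq> j"
  shows "en n i j c * en n i j (-c) = 1\<^sub>m n"
proof (rule mat_eq_action)
  fix u :: "'a vec" assume u: "u \<in> carrier_vec n"
  have "(en n i j c * en n i j (-c)) *\<^sub>v u = en n i j c *\<^sub>v (en n i j (-c) *\<^sub>v u)"
    using u by (simp add: assoc_mult_mat_vec[of _ n n _ n])
  also have "\<dots> = u" using u ij
    by (simp add: en_vec) (rule eq_vecI, auto)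
  finally show "(en n i j c * en n i j (-c)) *\<^sub>v u = 1\<^sub>m n *\<^sub>v u" using u by simp
qed (use mult_carrier_mat[OF en_carrier en_carrier] in auto)

lemma elem_gens_en: "elem_gens n = {en n i j c | i j c. i < n \<and> j < n \<and> i \<noteq> j}"
  unfolding elem_gens_def en_def by simp

lemma En_ginv: "ginv n (elem_gens n :: 'a::comm_ring_1 mat set)"
  unfolding ginv_def elem_gens_en
proof (intro conjI ballI)
  show "{en n i j c | i j c. i < n \<and> j < n \<and> i \<noteq> j} \<subseteq> carrier_mat n n" by auto
next
  fix s :: "'a mat" assume "s \<in> {en n i j c | i j c. i < n \<and> j < n \<and> i \<noteq> j}"
  then obtain i j c where s: "s = en n i j c" "i < n" "j < n" "i \<noteq> j" by blast
  show "\<exists>s'\<in>{en n i j c | i j c. i < n \<and> j < n \<and> i \<noteq> j}. s * s' = 1\<^sub>m n \<and> s' * s = 1\<^sub>m n"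
    using en_inv[OF s(2-4), of c] en_inv[OF s(2-4), of "-c"] s
    by (intro bexI[of _ "en n i j (-c)"]) auto
qed

lemma en_in_En: "i < n \<Longrightarrow> j < n \<Longrightarrow> i \<noteq> j \<Longrightarrow> en n i j c \<in> En n"
  unfolding En_def by (rule gg_gen[OF En_ginv]) (auto simp: elem_gens_en)

lemma En_mult: "A \<in> En n \<Longrightarrow> B \<in> En n \<Longrightarrow> A * B \<in> En n"
  unfolding En_def by (rule gg_mult_closed[OF En_ginv])

lemma En_carrier: "A \<in> En n \<Longrightarrow> A \<in> carrier_mat n n"
  unfolding En_def by (rule gg_carrier[OF En_ginv])

lemma En_one: "1\<^sub>m n \<in> En n"
  unfolding En_def by (rule gen_group.gg_one)

lemma En_inv: "A \<in> En n \<Longrightarrow> \<exists>A'\<in>En n. A * A' = 1\<^sub>m n \<and> A' * A = 1\<^sub>m n"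
  unfolding En_def by (rule gg_inv_ex[OF En_ginv])

lemma En_mult_en: "A \<in> En n \<Longrightarrow> i < n \<Longrightarrow> j < n \<Longrightarrow> i \<noteq> j \<Longrightarrow> A * en n i j c \<in> En n"
  unfolding En_def by (rule gen_group.gg_mult) (auto simp: elem_gens_en)

definition outer :: "nat \<Rightarrow> 'a::comm_ring_1 vec \<Rightarrow> 'a vec \<Rightarrow> 'a mat" where
  "outer n x y = mat n n (\<lambda>(r,s). x $ r * y $ s)"

lemma outer_dims[simp]: "dim_row (outer n x y) = n" "dim_col (outer n x y) = n"
  by (simp_all add: outer_def)

lemma op_carrier[simp]: "1\<^sub>m n + outer n x y \<in> carrier_mat n n"
  unfolding outer_def by (intro add_carrier_mat) auto

lemma op_vec: assumes x: "x \<in> carrier_vec n" and y: "y \<in> carrier_vec n" and u: "u \<in> carrier_vec n"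
  shows "(1\<^sub>m n + outer n x y) *\<^sub>v u = u + (y \<bullet> u) \<cdot>\<^sub>v x"
proof (rule eq_vecI)
  fix k assume "k < dim_vec (u + (y \<bullet> u) \<cdot>\<^sub>v x)"
  then have k: "k < n" using x by simp
  have "((1\<^sub>m n + outer n x y) *\<^sub>v u) $ k = (\<Sum>l\<in>{0..<n}. (1\<^sub>m n + outer n x y) $$ (k,l) * u $ l)"
    using mat_vec_sum[OF op_carrier u k] .
  also have "\<dots> = (\<Sum>l\<in>{0..<n}. (if l = k then u $ l else 0) + x $ k * (y $ l * u $ l))"
    by (rule sum.cong) (auto simp: outer_def k algebra_simps)
  also have "\<dots> = u $ k + x $ k * (y \<bullet> u)"
    using u by (simp add: sum.distrib sum_distrib_left[symmetric] sum.delta' k scalar_prod_def)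
  finally show "((1\<^sub>m n + outer n x y) *\<^sub>v u) $ k = (u + (y \<bullet> u) \<cdot>\<^sub>v x) $ k"
    using u x k by (simp add: mult.commute)
qed (use u x in simp)

lemma op_transpose: "transpose_mat (1\<^sub>m n + outer n x y) = 1\<^sub>m n + outer n y x"
  by (rule eq_matI) (auto simp: outer_def mult.commute)

lemma op_zero: "x \<in> carrier_vec n \<Longrightarrow> y \<in> carrier_vec n \<Longrightarrow> (\<forall>u\<in>carrier_vec n. (y \<bullet> u) \<cdot>\<^sub>v x = 0\<^sub>v n) \<Longrightarrow> 1\<^sub>m n + outer n x y = 1\<^sub>m n"
  by (rule mat_eq_action) (auto simp: op_vec)


definition zL :: "nat \<Rightarrow> 'a::comm_ring_1 vec \<Rightarrow> nat set \<Rightarrow> 'a vec" where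
  "zL n z L = vec n (\<lambda>t. if t \<in> L then z $ t else 0)"

lemma zL_carrier[simp]: "zL n z L \<in> carrier_vec n"
  by (simp add: zL_def)

lemma zL_dim[simp]: "dim_vec (zL n z L) = n"
  by (simp add: zL_def)

lemma zL_index[simp]: "t < n \<Longrightarrow> zL n z L $ t = (if t \<in> L then z $ t else 0)"
  by (simp add: zL_def)

lemma zL_full: "z \<in> carrier_vec n \<Longrightarrow> z $ k = 0 \<Longrightarrow> zL n z ({..<n} - {k}) = z"
  by (rule eq_vecI) auto

lemma zL_insert_sp: assumes "l \<notin> L" "l < n" "u \<in> carrier_vec n"
  shows "zL n z (insert l L) \<bullet> u = zL n z L \<bullet> u + z $ l * u $ l"
proof -
  have "zL n z (insert l L) \<bullet> u = (\<Sum>t\<in>{0..<n}. (if t \<in> L then z $ t else 0) * u $ t + (if t = l then z $ l * u $ l else 0))"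
    unfolding scalar_prod_def using assms by (intro sum.cong) auto
  also have "\<dots> = zL n z L \<bullet> u + z $ l * u $ l"
    unfolding scalar_prod_def using assms by (simp add: sum.distrib sum.delta')
  finally show ?thesis .
qed

lemma L_col_aux: assumes k: "k < n" and fin: "finite L" and sub: "L \<subseteq> {..<n} - {k}"
  shows "1\<^sub>m n + outer n (zL n z L) (unit_vec n k) \<in> En n"
  using fin sub
proof (induction L rule: finite_induct)
  case empty
  have "1\<^sub>m n + outer n (zL n z {}) (unit_vec n k) = 1\<^sub>m n"
    by (rule eq_matI) (auto simp: outer_def)
  then show ?case using En_one by simp
next
  case (insert l L)
  have l: "l < n" "l \<noteq> k" using insert.prems by auto
  have IH: "1\<^sub>m n + outer n (zL n z L) (unit_vec n k) \<in> En n" using insert by auto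
  have eq: "1\<^sub>m n + outer n (zL n z (insert l L)) (unit_vec n k) = (1\<^sub>m n + outer n (zL n z L) (unit_vec n k)) * en n l k (z $ l)"
  proof (rule mat_eq_action)
    fix u :: "'a vec" assume u: "u \<in> carrier_vec n"
    have "((1\<^sub>m n + outer n (zL n z L) (unit_vec n k)) * en n l k (z $ l)) *\<^sub>v u
       = (1\<^sub>m n + outer n (zL n z L) (unit_vec n k)) *\<^sub>v (u + (z $ l * u $ k) \<cdot>\<^sub>v unit_vec n l)"
      using u l k by (simp add: assoc_mult_mat_vec[of _ n n _ n] en_vec)
    also have "\<dots> = (u + (z $ l * u $ k) \<cdot>\<^sub>v unit_vec n l) + (u $ k) \<cdot>\<^sub>v zL n z L"
      using u l k by (simp add: op_vec)
    also have "\<dots> = (1\<^sub>m n + outer n (zL n z (insert l L)) (unit_vec n k)) *\<^sub>v u"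
      using u l k insert.hyps(2) by (simp add: op_vec) (rule eq_vecI, auto simp: algebra_simps)
    finally show "(1\<^sub>m n + outer n (zL n z (insert l L)) (unit_vec n k)) *\<^sub>v u =
       ((1\<^sub>m n + outer n (zL n z L) (unit_vec n k)) * en n l k (z $ l)) *\<^sub>v u" by simp
  qed (use mult_carrier_mat[OF op_carrier en_carrier] in auto)
  show ?case unfolding eq by (rule En_mult_en[OF IH l(1) k l(2)])
qed

lemma L_col: assumes k: "k < n" and z: "z \<in> carrier_vec n" "z $ k = 0"
  shows "1\<^sub>m n + outer n z (unit_vec n k) \<in> En n"
  using L_col_aux[OF k, of "{..<n} - {k}" z] zL_full[OF z] by auto

lemma L_row_aux: assumes k: "k < n" and fin: "finite L" and sub: "L \<subseteq> {..<n} - {k}"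
  shows "1\<^sub>m n + outer n (unit_vec n k) (zL n z L) \<in> En n"
  using fin sub
proof (induction L rule: finite_induct)
  case empty
  have "1\<^sub>m n + outer n (unit_vec n k) (zL n z {}) = 1\<^sub>m n"
    by (rule eq_matI) (auto simp: outer_def)
  then show ?case using En_one by simp
next
  case (insert l L)
  have l: "l < n" "l \<noteq> k" using insert.prems by auto
  have kL: "k \<notin> L" using insert.prems by auto
  have IH: "1\<^sub>m n + outer n (unit_vec n k) (zL n z L) \<in> En n" using insert by auto
  have eq: "1\<^sub>m n + outer n (unit_vec n k) (zL n z (insert l L)) = (1\<^sub>m n + outer n (unit_vec n k) (zL n z L)) * en n k l (z $ l)"
  proof (rule mat_eq_action)
    fix u :: "'a vec" assume u: "u \<in> carrier_vec n"
    have sp: "zL n z L \<bullet> (u + (z $ l * u $ l) \<cdot>\<^sub>v unit_vec n k) = zL n z L \<bullet> u"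
      using u k kL by (simp add: scalar_prod_add_distrib[of _ n])
    have "((1\<^sub>m n + outer n (unit_vec n k) (zL n z L)) * en n k l (z $ l)) *\<^sub>v u
       = (1\<^sub>m n + outer n (unit_vec n k) (zL n z L)) *\<^sub>v (u + (z $ l * u $ l) \<cdot>\<^sub>v unit_vec n k)"
      using u l k by (simp add: assoc_mult_mat_vec[of _ n n _ n] en_vec)
    also have "\<dots> = (u + (z $ l * u $ l) \<cdot>\<^sub>v unit_vec n k) + (zL n z L \<bullet> u) \<cdot>\<^sub>v unit_vec n k"
      using u l k by (simp add: op_vec sp)
    also have "\<dots> = (1\<^sub>m n + outer n (unit_vec n k) (zL n z (insert l L))) *\<^sub>v u"
      using u l k insert.hyps(2) by (simp add: op_vec zL_insert_sp) (rule eq_vecI, auto simp: algebra_simps)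
    finally show "(1\<^sub>m n + outer n (unit_vec n k) (zL n z (insert l L))) *\<^sub>v u =
       ((1\<^sub>m n + outer n (unit_vec n k) (zL n z L)) * en n k l (z $ l)) *\<^sub>v u" by simp
  qed (use mult_carrier_mat[OF op_carrier en_carrier] in auto)
  show ?case unfolding eq by (rule En_mult_en[OF IH k l(1) l(2)[symmetric]])
qed

lemma L_row: assumes k: "k < n" and z: "z \<in> carrier_vec n" "z $ k = 0"
  shows "1\<^sub>m n + outer n (unit_vec n k) z \<in> En n"
  using L_row_aux[OF k, of "{..<n} - {k}" z] zL_full[OF z] by auto

lemma op_mult_vec: "A \<in> carrier_mat n n \<Longrightarrow> B \<in> carrier_mat n n \<Longrightarrow> u \<in> carrier_vec n \<Longrightarrow>
  (A * B) *\<^sub>v u = A *\<^sub>v (B *\<^sub>v u)"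
  for A :: "'a::comm_ring_1 mat"
  by (simp add: assoc_mult_mat_vec[of _ n n _ n])

lemma comm_En: assumes k: "k < n" and x: "x \<in> carrier_vec n" and y: "y \<in> carrier_vec n"
  and xk: "x $ k = 0" and yk: "y $ k = 0" and yx: "y \<bullet> x = 0"
  shows "1\<^sub>m n + outer n x y \<in> En n"
proof -
  let ?e = "unit_vec n k :: 'a vec"
  define \<alpha> where "\<alpha> = 1\<^sub>m n + outer n x ?e"
  define \<beta> where "\<beta> = 1\<^sub>m n + outer n ?e y"
  define \<alpha>' where "\<alpha>' = 1\<^sub>m n + outer n (-x) ?e"
  define \<beta>' where "\<beta>' = 1\<^sub>m n + outer n ?e (-y)"
  have mem: "\<alpha> \<in> En n" "\<beta> \<in> En n" "\<alpha>' \<in> En n" "\<beta>' \<in> En n"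
    unfolding \<alpha>_def \<beta>_def \<alpha>'_def \<beta>'_def
    using L_col[OF k x xk] L_row[OF k y yk] L_col[of k n "-x"] L_row[of k n "-y"] x y xk yk k by auto
  have car: "\<alpha> \<in> carrier_mat n n" "\<beta> \<in> carrier_mat n n" "\<alpha>' \<in> carrier_mat n n" "\<beta>' \<in> carrier_mat n n"
    unfolding \<alpha>_def \<beta>_def \<alpha>'_def \<beta>'_def by auto
  have P: "\<alpha> * \<beta> * \<alpha>' * \<beta>' \<in> En n" using mem by (intro En_mult) auto
  have "1\<^sub>m n + outer n x y = \<alpha> * \<beta> * \<alpha>' * \<beta>'"
  proof (rule mat_eq_action)
    fix u :: "'a vec" assume u: "u \<in> carrier_vec n"
    define a where "a = - (y \<bullet> u)"
    define u1 where "u1 = u + a \<cdot>\<^sub>v ?e"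
    have u1c: "u1 \<in> carrier_vec n" unfolding u1_def using u by auto
    have s1: "\<beta>' *\<^sub>v u = u1"
      unfolding \<beta>'_def u1_def a_def using u y k by (simp add: op_vec)
    define b where "b = - (u $ k + a)"
    define u2 where "u2 = u1 + b \<cdot>\<^sub>v x"
    have u2c: "u2 \<in> carrier_vec n" unfolding u2_def using u1c x by auto
    have eu1: "?e \<bullet> u1 = u $ k + a" unfolding u1_def using u k by simp
    have s2: "\<alpha>' *\<^sub>v u1 = u2"
      unfolding \<alpha>'_def u2_def b_def using u1c x k eu1
      by (simp add: op_vec) (rule eq_vecI, auto simp: algebra_simps)
    have yu2: "y \<bullet> u2 = y \<bullet> u"
    proof -
      have "y \<bullet> u2 = y \<bullet> u + a * (y \<bullet> ?e) + b * (y \<bullet> x)"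
        unfolding u2_def u1_def using u x y k
        by (simp add: scalar_prod_add_distrib[of _ n])
      then show ?thesis using yx yk k by simp
    qed
    define u3 where "u3 = u2 + (y \<bullet> u) \<cdot>\<^sub>v ?e"
    have u3c: "u3 \<in> carrier_vec n" unfolding u3_def using u2c by auto
    have s3: "\<beta> *\<^sub>v u2 = u3"
      unfolding \<beta>_def u3_def using u2c y k yu2 by (simp add: op_vec)
    have eu3: "?e \<bullet> u3 = u $ k"
      unfolding u3_def u2_def u1_def a_def using u x k xk by simp
    have s4: "\<alpha> *\<^sub>v u3 = u + (y \<bullet> u) \<cdot>\<^sub>v x"
      unfolding \<alpha>_def using u3c x k eu3
      by (simp add: op_vec u3_def u2_def u1_def a_def b_def) (rule eq_vecI, auto simp: algebra_simps)
    have "(\<alpha> * \<beta> * \<alpha>' * \<beta>') *\<^sub>v u = \<alpha> *\<^sub>v (\<beta> *\<^sub>v (\<alpha>' *\<^sub>v (\<beta>' *\<^sub>v u)))"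
      using car u by (simp add: op_mult_vec[of _ n])
    also have "\<dots> = u + (y \<bullet> u) \<cdot>\<^sub>v x" using s1 s2 s3 s4 by simp
    also have "\<dots> = (1\<^sub>m n + outer n x y) *\<^sub>v u" using u x y by (simp add: op_vec)
    finally show "(1\<^sub>m n + outer n x y) *\<^sub>v u = (\<alpha> * \<beta> * \<alpha>' * \<beta>') *\<^sub>v u" by simp
  qed (use car in auto)
  then show ?thesis using P by simp
qed

lemma exists_third: "3 \<le> n \<Longrightarrow> \<exists>k<n. k \<noteq> i \<and> k \<noteq> (j::nat)"
proof -
  assume n: "3 \<le> n"
  have "(0::nat) \<notin> {i,j} \<or> (1::nat) \<notin> {i,j} \<or> (2::nat) \<notin> {i,j}" by auto
  then show ?thesis
  proof (elim disjE)
    assume "(0::nat) \<notin> {i,j}" then show ?thesis using n by (intro exI[of _ 0]) auto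
  next
    assume "(1::nat) \<notin> {i,j}" then show ?thesis using n by (intro exI[of _ 1]) auto
  next
    assume "(2::nat) \<notin> {i,j}" then show ?thesis using n by (intro exI[of _ 2]) auto
  qed
qed

lemma suslin: assumes n3: "3 \<le> n" and w: "w \<in> carrier_vec n" and ij: "i < n" "j < n" "i \<noteq> j"
  shows "1\<^sub>m n + outer n (c \<cdot>\<^sub>v w) ((w $ j) \<cdot>\<^sub>v unit_vec n i + (- (w $ i)) \<cdot>\<^sub>v unit_vec n j) \<in> En n"
proof -
  obtain k where k: "k < n" "k \<noteq> i" "k \<noteq> j" using exists_third[OF n3] by blast
  define x where "x = c \<cdot>\<^sub>v w"
  define y where "y = (w $ j) \<cdot>\<^sub>v unit_vec n i + (- (w $ i)) \<cdot>\<^sub>v unit_vec n j"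
  let ?e = "unit_vec n k :: 'a vec"
  have xc: "x \<in> carrier_vec n" and yc: "y \<in> carrier_vec n" unfolding x_def y_def using w by auto
  have yk: "y $ k = 0" unfolding y_def using k ij by simp
  have yw: "y \<bullet> w = 0" unfolding y_def using w ij
    by (simp add: add_scalar_prod_distrib[of _ n] mult.commute)
  have yx: "y \<bullet> x = 0" unfolding x_def using yw yc w by simp
  define x' where "x' = x + (- (x $ k)) \<cdot>\<^sub>v ?e"
  have x'c: "x' \<in> carrier_vec n" unfolding x'_def using xc by auto
  have x'k: "x' $ k = 0" unfolding x'_def using xc k by simp
  have yx': "y \<bullet> x' = 0" unfolding x'_def using yx yk xc yc k
    by (simp add: scalar_prod_add_distrib[of _ n])
  have A: "1\<^sub>m n + outer n x' y \<in> En n" by (rule comm_En[OF k(1) x'c yc x'k yk yx'])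
  have B: "1\<^sub>m n + outer n ?e ((x $ k) \<cdot>\<^sub>v y) \<in> En n"
    by (rule L_row) (use k yc yk in auto)
  have "1\<^sub>m n + outer n x y = (1\<^sub>m n + outer n x' y) * (1\<^sub>m n + outer n ?e ((x $ k) \<cdot>\<^sub>v y))"
  proof (rule mat_eq_action)
    fix u :: "'a vec" assume u: "u \<in> carrier_vec n"
    define u1 where "u1 = u + ((x $ k) * (y \<bullet> u)) \<cdot>\<^sub>v ?e"
    have u1c: "u1 \<in> carrier_vec n" unfolding u1_def using u by auto
    have s1: "(1\<^sub>m n + outer n ?e ((x $ k) \<cdot>\<^sub>v y)) *\<^sub>v u = u1"
      unfolding u1_def using u yc k by (simp add: op_vec)
    have yu1: "y \<bullet> u1 = y \<bullet> u" unfolding u1_def using u yc k yk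
      by (simp add: scalar_prod_add_distrib[of _ n])
    have "((1\<^sub>m n + outer n x' y) * (1\<^sub>m n + outer n ?e ((x $ k) \<cdot>\<^sub>v y))) *\<^sub>v u
       = (1\<^sub>m n + outer n x' y) *\<^sub>v u1" using u s1 by (simp add: op_mult_vec[of _ n])
    also have "\<dots> = u1 + (y \<bullet> u) \<cdot>\<^sub>v x'" using u1c x'c yc yu1 by (simp add: op_vec)
    also have "\<dots> = u + (y \<bullet> u) \<cdot>\<^sub>v x" unfolding u1_def x'_def using u xc k
      by (rule_tac eq_vecI) (auto simp: algebra_simps)
    also have "\<dots> = (1\<^sub>m n + outer n x y) *\<^sub>v u" using u xc yc by (simp add: op_vec)
    finally show "(1\<^sub>m n + outer n x y) *\<^sub>v u = ((1\<^sub>m n + outer n x' y) * (1\<^sub>m n + outer n ?e ((x $ k) \<cdot>\<^sub>v y))) *\<^sub>v u" by simp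
  qed (auto intro: mult_carrier_mat)
  then have "1\<^sub>m n + outer n x y \<in> En n" using En_mult[OF A B] by simp
  then show ?thesis unfolding x_def y_def .
qed


lemma ident:
  fixes a b U :: "'a::comm_ring_1 FA"
  assumes sc1: "\<And>d. a * sc d = sc d * a" "\<And>d. b * sc d = sc d * b" "\<And>d. U * sc d = sc d * U"
    and sc2: "\<And>d z. a * (sc d * z) = sc d * (a * z)" "\<And>d z. b * (sc d * z) = sc d * (b * z)" "\<And>d z. U * (sc d * z) = sc d * (U * z)"
  shows "(1 + sc c * (a * b)) * U * (1 - sc c * (a * b)) - (U + sc c * (sc uj * a - sc ui * b))
   = sc c * (a * (b * U + U * b - sc uj) - (a * U + U * a - sc ui) * b)
     - sc c * sc c * ((a * (b * U + U * b - sc uj) - (a * U + U * a - sc ui) * b) * (a * b)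
        + sc uj * ((a * a) * b) - sc ui * ((a * b + b * a) * b - a * (b * b))
        + U * (a * (a * b + b * a) * b - (a * a) * (b * b)))"
  by (simp add: algebra_simps sc1 sc2 sc_mult sc_mult2)

lemma ident2:
  fixes a b :: "'a::comm_ring_1 FA"
  assumes sc1: "\<And>d. a * sc d = sc d * a" "\<And>d. b * sc d = sc d * b"
    and sc2: "\<And>d z. a * (sc d * z) = sc d * (a * z)" "\<And>d z. b * (sc d * z) = sc d * (b * z)"
  shows "(1 + sc c * (a * b)) * (1 + sc c * (b * a)) - 1 = sc c * (a * b + b * a) + sc c * sc c * (a * (b * b) * a)"
    and "(1 + sc c * (a * b)) * (1 - sc c * (a * b)) - 1 = - (sc c * sc c) * (a * (a * b + b * a) * b - (a * a) * (b * b))"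
  by (simp_all add: algebra_simps sc1 sc2 sc_mult sc_mult2)

lemma bil_sum: assumes u: "u \<in> carrier_vec (2*n)" and v: "v \<in> carrier_vec (2*n)"
  shows "bil n u v = (\<Sum>k<n. u $ k * v $ (n+k) + v $ k * u $ (n+k))"
proof -
  have "qform n (u+v) = (\<Sum>k<n. (u $ k + v $ k) * (u $ (n+k) + v $ (n+k)))"
    unfolding qform_def using u v by (intro sum.cong) auto
  then have "bil n u v = (\<Sum>k<n. (u $ k + v $ k) * (u $ (n+k) + v $ (n+k)) - u $ k * u $ (n+k) - v $ k * v $ (n+k))"
    by (simp add: bil_def qform_def sum_subtractf)
  also have "\<dots> = (\<Sum>k<n. u $ k * v $ (n+k) + v $ k * u $ (n+k))"
    by (rule sum.cong) (auto simp: algebra_simps)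
  finally show ?thesis .
qed

lemma ub_carrier[simp]: "ub n l \<in> carrier_vec (2*n)"
  by (simp add: ub_def)

lemma ub_index: "k < 2*n \<Longrightarrow> ub n l $ k = (if k = l then 1 else 0)"
  by (simp add: ub_def unit_vec_def)

lemma bil_ub: assumes l: "l < 2*n" and u: "u \<in> carrier_vec (2*n)"
  shows "bil n (ub n l) u = u $ (hpart n l)"
proof (cases "l < n")
  assume lt: "l < n"
  have "bil n (ub n l) u = (\<Sum>k<n. (if k = l then u $ (n+k) else 0))"
    unfolding bil_sum[OF ub_carrier u] using lt by (intro sum.cong) (auto simp: ub_index)
  also have "\<dots> = u $ (hpart n l)" using lt by (simp add: hpart_def add.commute)
  finally show ?thesis .
next
  assume ge: "\<not> l < n"
  have "bil n (ub n l) u = (\<Sum>k<n. (if k = l - n then u $ k else 0))"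
    unfolding bil_sum[OF ub_carrier u] using ge l by (intro sum.cong) (auto simp: ub_index)
  also have "\<dots> = u $ (hpart n l)" using ge l by (simp add: hpart_def)
  finally show ?thesis .
qed

lemma qform_ub: "qform n (ub n l :: 'a::comm_ring_1 vec) = 0"
  unfolding qform_def
proof (intro sum.neutral ballI)
  fix x assume "x \<in> {..<n}"
  then have "x < 2*n" "n + x < 2*n" by auto
  then show "ub n l $ x * ub n l $ (n + x) = (0::'a)" by (simp add: ub_index)
qed

lemma ub_dim[simp]: "dim_vec (ub n l) = 2*n"
  by (simp add: ub_def)


lemma gm_vec: assumes u: "u \<in> carrier_vec (2*n)" and ij: "i < 2*n" "j < 2*n"
  shows "gm n i j c *\<^sub>v u = u + (c * u $ j) \<cdot>\<^sub>v ub n i + (- (c * u $ (hpart n i))) \<cdot>\<^sub>v ub n (hpart n j)"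
proof (rule eq_vecI)
  fix k assume "k < dim_vec (u + (c * u $ j) \<cdot>\<^sub>v ub n i + (- (c * u $ (hpart n i))) \<cdot>\<^sub>v ub n (hpart n j))"
  then have k: "k < 2*n" by (simp add: ub_def)
  have "(u + (c * u $ j) \<cdot>\<^sub>v ub n i + (- (c * u $ (hpart n i))) \<cdot>\<^sub>v ub n (hpart n j)) $ k
     = u $ k + (c * u $ j) * ub n i $ k + (- (c * u $ (hpart n i))) * ub n (hpart n j) $ k"
    using u k by simp
  also have "\<dots> = (gm n i j c *\<^sub>v u) $ k"
    unfolding gm_vec_index[OF u k ij, of c] ub_index[OF k] by (simp add: algebra_simps)
  finally show "(gm n i j c *\<^sub>v u) $ k = (u + (c * u $ j) \<cdot>\<^sub>v ub n i + (- (c * u $ (hpart n i))) \<cdot>\<^sub>v ub n (hpart n j)) $ k" by simp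
qed (use u gm_carrier[of n i j c] in \<open>simp add: ub_def\<close>)

lemma gm_dims[simp]: "dim_row (gm n i j c) = 2*n" "dim_col (gm n i j c) = 2*n"
  by (simp_all add: gm_def emat_def)

lemma gm_inv: assumes ij: "i < 2*n" "j < 2*n" "i \<noteq> j"
  shows "gm n i j c * gm n i j (-c) = 1\<^sub>m (2*n)"
proof (rule mat_eq_action)
  fix u :: "'a vec" assume u: "u \<in> carrier_vec (2*n)"
  have h1: "hpart n i < 2*n" "hpart n j < 2*n" using ij hpart_lt by auto
  have ne: "j \<noteq> hpart n j" "hpart n i \<noteq> i" "hpart n i \<noteq> hpart n j"
    using hpart_neq[OF ij(2)] hpart_neq[OF ij(1)] hpart_inj[OF ij(1) ij(2)] ij(3) by auto
  have "(gm n i j c * gm n i j (-c)) *\<^sub>v u = gm n i j c *\<^sub>v (gm n i j (-c) *\<^sub>v u)"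
    by (rule op_mult_vec[OF gm_carrier gm_carrier u])
  also have "\<dots> = u"
  proof -
    define v where "v = gm n i j (-c) *\<^sub>v u"
    have vc: "v \<in> carrier_vec (2*n)" unfolding v_def by (rule mult_mat_vec_carrier[OF gm_carrier u])
    have vj: "v $ j = u $ j" unfolding v_def using gm_vec_index[OF u ij(2) ij(1,2), of "-c"] ne ij(3) by simp
    have vi: "v $ hpart n i = u $ hpart n i" unfolding v_def using gm_vec_index[OF u h1(1) ij(1,2), of "-c"] ne ij(3) by simp
    have v: "v = u + (- c * u $ j) \<cdot>\<^sub>v ub n i + (- (- c * u $ (hpart n i))) \<cdot>\<^sub>v ub n (hpart n j)"
      unfolding v_def by (rule gm_vec[OF u ij(1,2)])
    have "gm n i j c *\<^sub>v v = v + (c * u $ j) \<cdot>\<^sub>v ub n i + (- (c * u $ (hpart n i))) \<cdot>\<^sub>v ub n (hpart n j)"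
      using gm_vec[OF vc ij(1,2), of c] vj vi by simp
    also have "\<dots> = u" unfolding v using u by (intro eq_vecI) (auto simp: algebra_simps)
    finally show ?thesis unfolding v_def .
  qed
  finally show "(gm n i j c * gm n i j (-c)) *\<^sub>v u = 1\<^sub>m (2*n) *\<^sub>v u" using u by simp
qed (use mult_carrier_mat[OF gm_carrier gm_carrier] in auto)

lemma Fr_star: assumes "x \<in> Fr n" shows "star x \<in> Fr n"
proof -
  have fin: "finite {w. Rep_FA x w \<noteq> 0}" and lt: "\<forall>w. Rep_FA x w \<noteq> 0 \<longrightarrow> (\<forall>k\<in>set w. k < 2*n)"
    using assms by (auto simp: Fr_def fa_free_def)
  have "{w. Rep_FA (star x) w \<noteq> 0} = rev ` {w. Rep_FA x w \<noteq> 0}"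
  proof (rule Set.set_eqI)
    fix w
    show "w \<in> {w. Rep_FA (star x) w \<noteq> 0} \<longleftrightarrow> w \<in> rev ` {w. Rep_FA x w \<noteq> 0}"
    proof
      assume "w \<in> {w. Rep_FA (star x) w \<noteq> 0}"
      then have "rev w \<in> {w. Rep_FA x w \<noteq> 0}" by (simp add: Rep_star fa_star_def)
      then show "w \<in> rev ` {w. Rep_FA x w \<noteq> 0}" by (rule image_eqI[rotated]) simp
    next
      assume "w \<in> rev ` {w. Rep_FA x w \<noteq> 0}"
      then obtain v where "w = rev v" "Rep_FA x v \<noteq> 0" by blast
      then show "w \<in> {w. Rep_FA (star x) w \<noteq> 0}" by (simp add: Rep_star fa_star_def)
    qed
  qed
  then have "finite {w. Rep_FA (star x) w \<noteq> 0}" using fin by simp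
  moreover have "\<forall>w. Rep_FA (star x) w \<noteq> 0 \<longrightarrow> (\<forall>k\<in>set w. k < 2*n)"
    using lt by (auto simp: Rep_star fa_star_def)
  ultimately show ?thesis by (simp add: Fr_def fa_free_def)
qed

lemma star_one_plus: "star (1 + sc c * (iota n p * iota n q)) = 1 + sc c * (iota n q * iota n p)"
  by (simp add: star_add star_one star_mult star_sc star_iota sc_comm mult.assoc)

lemma cl_facts:
  fixes u :: "'a::comm_ring_1 vec"
  assumes ij: "i < 2*n" "j < 2*n" "i \<noteq> j" and u: "u \<in> carrier_vec (2*n)"
  shows "(iota n (ub n i) :: 'a FA) * iota n (ub n i) \<in> Jd n"
    and "(iota n (ub n (hpart n j)) :: 'a FA) * iota n (ub n (hpart n j)) \<in> Jd n"
    and "(iota n (ub n i) :: 'a FA) * iota n (ub n (hpart n j)) + iota n (ub n (hpart n j)) * iota n (ub n i) \<in> Jd n"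
    and "iota n (ub n i) * iota n u + iota n u * iota n (ub n i) - sc (u $ hpart n i) \<in> Jd n"
    and "iota n (ub n (hpart n j)) * iota n u + iota n u * iota n (ub n (hpart n j)) - sc (u $ j) \<in> Jd n"
proof -
  have h: "hpart n i < 2*n" "hpart n j < 2*n" using ij hpart_lt by auto
  show "(iota n (ub n i) :: 'a FA) * iota n (ub n i) \<in> Jd n"
    using Jd_sq[OF ub_carrier, of n i] by (simp add: qform_ub sc_zero)
  show "(iota n (ub n (hpart n j)) :: 'a FA) * iota n (ub n (hpart n j)) \<in> Jd n"
    using Jd_sq[OF ub_carrier, of n "hpart n j"] by (simp add: qform_ub sc_zero)
  have b0: "bil n (ub n i) (ub n (hpart n j)) = (0::'a)"
    using bil_ub[OF ij(1) ub_carrier, of "hpart n j"] h hpart_inj[OF ij(1) ij(2)] ij(3)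
    by (simp add: ub_index)
  have "(iota n (ub n i) :: 'a FA) * iota n (ub n (hpart n j)) + iota n (ub n (hpart n j)) * iota n (ub n i) - sc (bil n (ub n i) (ub n (hpart n j))) \<in> Jd n"
    by (rule Jd_pol[OF ub_carrier ub_carrier])
  moreover have sb0: "sc (bil n (ub n i) (ub n (hpart n j))) = (0::'a FA)"
    by (simp only: b0 sc_zero)
  ultimately show "(iota n (ub n i) :: 'a FA) * iota n (ub n (hpart n j)) + iota n (ub n (hpart n j)) * iota n (ub n i) \<in> Jd n"
    by simp
  show "iota n (ub n i) * iota n u + iota n u * iota n (ub n i) - sc (u $ hpart n i) \<in> Jd n"
    using Jd_pol[OF ub_carrier u, of i] bil_ub[OF ij(1) u] by simp
  show "iota n (ub n (hpart n j)) * iota n u + iota n u * iota n (ub n (hpart n j)) - sc (u $ j) \<in> Jd n"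
    using Jd_pol[OF ub_carrier u, of "hpart n j"] bil_ub[OF h(2) u] hpart_hpart[OF ij(2)] by simp
qed

definition liftx :: "nat \<Rightarrow> nat \<Rightarrow> nat \<Rightarrow> 'a::comm_ring_1 \<Rightarrow> 'a FA" where
  "liftx n i j c = 1 + sc c * (iota n (ub n i) * iota n (ub n (hpart n j)))"

lemma liftx_neg: "liftx n i j (-c) = 1 - sc c * (iota n (ub n i) * iota n (ub n (hpart n j)))"
  by (simp add: liftx_def sc_neg)

lemma liftx_Fr: "liftx n i j c \<in> Fr n"
  unfolding liftx_def by (intro Fr_add Fr_mult Fr_one Fr_sc Fr_iota)

lemma liftx_Ev: "liftx n i j c \<in> Ev"
  unfolding liftx_def by (intro Ev_add Ev_mult Ev_one Ev_sc Ev_iota2)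

lemma liftx_star:
  fixes c :: "'a::comm_ring_1"
  assumes ij: "i < 2*n" "j < 2*n" "i \<noteq> j"
  shows "ceq n (liftx n i j c * star (liftx n i j c)) 1"
proof -
  let ?a = "iota n (ub n i) :: 'a FA" and ?b = "iota n (ub n (hpart n j))"
  have u0: "(0\<^sub>v (2*n) :: 'a vec) \<in> carrier_vec (2*n)" by simp
  note F = cl_facts[OF ij u0]
  have "liftx n i j c * star (liftx n i j c) - 1 = sc c * (?a * ?b + ?b * ?a) + sc c * sc c * (?a * (?b * ?b) * ?a)"
    unfolding liftx_def star_one_plus by (rule ident2(1)[OF sc_comm sc_comm sc_comm2 sc_comm2])
  also have "\<dots> \<in> Jd n"
    by (rule Jd_add[OF Jd_multL[OF Fr_sc F(3)] Jd_multL[OF Fr_mult[OF Fr_sc Fr_sc] Jd_multR[OF Jd_multL[OF Fr_iota F(2)] Fr_iota]]])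
  finally show ?thesis by (simp add: ceq_def)
qed

lemma liftx_inv:
  fixes c :: "'a::comm_ring_1"
  assumes ij: "i < 2*n" "j < 2*n" "i \<noteq> j"
  shows "ceq n (liftx n i j c * liftx n i j (-c)) 1"
proof -
  let ?a = "iota n (ub n i) :: 'a FA" and ?b = "iota n (ub n (hpart n j))"
  have u0: "(0\<^sub>v (2*n) :: 'a vec) \<in> carrier_vec (2*n)" by simp
  note F = cl_facts[OF ij u0]
  have "liftx n i j c * liftx n i j (-c) - 1 = - (sc c * sc c) * (?a * (?a * ?b + ?b * ?a) * ?b - (?a * ?a) * (?b * ?b))"
    unfolding liftx_def liftx_neg[unfolded liftx_def] by (rule ident2(2)[OF sc_comm sc_comm sc_comm2 sc_comm2])
  also have "\<dots> \<in> Jd n"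
    by (rule Jd_multL[OF Fr_neg[OF Fr_mult[OF Fr_sc Fr_sc]] Jd_diff[OF Jd_multR[OF Jd_multL[OF Fr_iota F(3)] Fr_iota] Jd_multR[OF F(1) Fr_mult[OF Fr_iota Fr_iota]]]])
  finally show ?thesis by (simp add: ceq_def)
qed

lemma liftx_conj:
  fixes c :: "'a::comm_ring_1"
  assumes ij: "i < 2*n" "j < 2*n" "i \<noteq> j" and u: "u \<in> carrier_vec (2*n)"
  shows "ceq n (liftx n i j c * iota n u * liftx n i j (-c)) (iota n (gm n i j c *\<^sub>v u))"
proof -
  let ?a = "iota n (ub n i) :: 'a FA" and ?b = "iota n (ub n (hpart n j))" and ?U = "iota n u"
  note F = cl_facts[OF ij u]
  have g: "iota n (gm n i j c *\<^sub>v u) = ?U + sc c * (sc (u $ j) * ?a - sc (u $ hpart n i) * ?b)"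
  proof -
    have "iota n (gm n i j c *\<^sub>v u) = ?U + sc (c * u $ j) * ?a + sc (- (c * u $ hpart n i)) * ?b"
      unfolding gm_vec[OF u ij(1,2)] using u
      by (simp add: iota_add iota_smult)
    also have "\<dots> = ?U + sc c * (sc (u $ j) * ?a - sc (u $ hpart n i) * ?b)"
      by (simp add: sc_neg sc_mult[symmetric] algebra_simps)
    finally show ?thesis .
  qed
  have "liftx n i j c * ?U * liftx n i j (-c) - iota n (gm n i j c *\<^sub>v u)
   = sc c * (?a * (?b * ?U + ?U * ?b - sc (u $ j)) - (?a * ?U + ?U * ?a - sc (u $ hpart n i)) * ?b)
     - sc c * sc c * ((?a * (?b * ?U + ?U * ?b - sc (u $ j)) - (?a * ?U + ?U * ?a - sc (u $ hpart n i)) * ?b) * (?a * ?b)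
        + sc (u $ j) * ((?a * ?a) * ?b) - sc (u $ hpart n i) * ((?a * ?b + ?b * ?a) * ?b - ?a * (?b * ?b))
        + ?U * (?a * (?a * ?b + ?b * ?a) * ?b - (?a * ?a) * (?b * ?b)))"
    unfolding g liftx_def liftx_neg[unfolded liftx_def]
    by (rule ident[OF sc_comm sc_comm sc_comm sc_comm2 sc_comm2 sc_comm2])
  also have "\<dots> \<in> Jd n"
  proof -
    note A1 = Jd_diff[OF Jd_multL[OF Fr_iota F(5)] Jd_multR[OF F(4) Fr_iota]]
    note A2 = Jd_multR[OF F(1) Fr_iota]
    note A3 = Jd_diff[OF Jd_multR[OF F(3) Fr_iota] Jd_multL[OF Fr_iota F(2)]]
    note A4 = Jd_diff[OF Jd_multR[OF Jd_multL[OF Fr_iota F(3)] Fr_iota] Jd_multR[OF F(1) Fr_mult[OF Fr_iota Fr_iota]]]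
    show ?thesis
      by (rule Jd_diff[OF Jd_multL[OF Fr_sc A1] Jd_multL[OF Fr_mult[OF Fr_sc Fr_sc] Jd_add[OF Jd_diff[OF Jd_add[OF Jd_multR[OF A1 Fr_mult[OF Fr_iota Fr_iota]] Jd_multL[OF Fr_sc A2]] Jd_multL[OF Fr_sc A3]] Jd_multL[OF Fr_iota A4]]]])
  qed
  finally show ?thesis by (simp add: ceq_def)
qed


lemma eo_gens_gm: "eo_gens n = {gm n i j c | i j c. i < 2*n \<and> j < 2*n \<and> i \<noteq> j}"
  unfolding eo_gens_def gm_def by simp

lemma EO_ginv: "ginv (2*n) (eo_gens n :: 'a::comm_ring_1 mat set)"
  unfolding ginv_def eo_gens_gm
proof (intro conjI ballI)
  show "{gm n i j c | i j c. i < 2*n \<and> j < 2*n \<and> i \<noteq> j} \<subseteq> carrier_mat (2*n) (2*n)"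
    using gm_carrier by blast
next
  fix s :: "'a mat" assume "s \<in> {gm n i j c | i j c. i < 2*n \<and> j < 2*n \<and> i \<noteq> j}"
  then obtain i j c where s: "s = gm n i j c" "i < 2*n" "j < 2*n" "i \<noteq> j" by blast
  show "\<exists>s'\<in>{gm n i j c | i j c. i < 2*n \<and> j < 2*n \<and> i \<noteq> j}. s * s' = 1\<^sub>m (2*n) \<and> s' * s = 1\<^sub>m (2*n)"
    using gm_inv[OF s(2-4), of c] gm_inv[OF s(2-4), of "-c"] s
    by (intro bexI[of _ "gm n i j (-c)"]) auto
qed

lemma gm_in_EO: "i < 2*n \<Longrightarrow> j < 2*n \<Longrightarrow> i \<noteq> j \<Longrightarrow> gm n i j c \<in> EO n"
  unfolding EO_def by (rule gg_gen[OF EO_ginv]) (auto simp: eo_gens_gm)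

lemma EO_mult: "A \<in> EO n \<Longrightarrow> B \<in> EO n \<Longrightarrow> A * B \<in> EO n"
  unfolding EO_def by (rule gg_mult_closed[OF EO_ginv])

lemma EO_carrier: "A \<in> EO n \<Longrightarrow> A \<in> carrier_mat (2*n) (2*n)"
  unfolding EO_def by (rule gg_carrier[OF EO_ginv])

lemma EO_one: "1\<^sub>m (2*n) \<in> EO n"
  unfolding EO_def by (rule gen_group.gg_one)

lemma EO_inv: "A \<in> EO n \<Longrightarrow> \<exists>A'\<in>EO n. A * A' = 1\<^sub>m (2*n) \<and> A' * A = 1\<^sub>m (2*n)"
  unfolding EO_def by (rule gg_inv_ex[OF EO_ginv])

lemma EO_rm: "EO n = rm (2*n) (eo_gens n)"
  unfolding EO_def by (rule gen_group_rm[OF EO_ginv])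

definition LiftP :: "nat \<Rightarrow> 'a::comm_ring_1 mat \<Rightarrow> bool" where
 "LiftP n M \<longleftrightarrow> (\<exists>x y M'. x \<in> Fr n \<and> y \<in> Fr n \<and> x \<in> Ev \<and> y \<in> Ev \<and>
    ceq n (x * star x) 1 \<and> ceq n (y * star y) 1 \<and> ceq n (x * y) 1 \<and> ceq n (y * x) 1 \<and>
    M \<in> carrier_mat (2*n) (2*n) \<and> M' \<in> carrier_mat (2*n) (2*n) \<and> M * M' = 1\<^sub>m (2*n) \<and> M' * M = 1\<^sub>m (2*n) \<and>
    (\<forall>u\<in>carrier_vec (2*n). ceq n (x * iota n u * y) (iota n (M *\<^sub>v u))) \<and>
    (\<forall>u\<in>carrier_vec (2*n). ceq n (y * iota n u * x) (iota n (M' *\<^sub>v u))))"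

lemma LiftP_one: "LiftP n (1\<^sub>m (2*n) :: 'a::comm_ring_1 mat)"
  unfolding LiftP_def
  by (rule exI[of _ 1], rule exI[of _ 1], rule exI[of _ "1\<^sub>m (2*n)"])
     (simp add: Fr_one Ev_one star_one ceq_refl)

lemma LiftP_gm: assumes ij: "i < 2*n" "j < 2*n" "i \<noteq> j"
  shows "LiftP n (gm n i j c :: 'a::comm_ring_1 mat)"
  unfolding LiftP_def
proof (intro exI conjI)
  show "liftx n i j c \<in> Fr n" "liftx n i j (-c) \<in> Fr n" "liftx n i j c \<in> Ev" "liftx n i j (-c) \<in> Ev"
    by (rule liftx_Fr liftx_Ev)+
  show "ceq n (liftx n i j c * star (liftx n i j c)) 1" "ceq n (liftx n i j (-c) * star (liftx n i j (-c))) 1"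
    by (rule liftx_star[OF ij])+
  show "ceq n (liftx n i j c * liftx n i j (-c)) 1" by (rule liftx_inv[OF ij])
  show "ceq n (liftx n i j (-c) * liftx n i j c) 1" using liftx_inv[OF ij, of "-c"] by simp
  show "gm n i j c \<in> carrier_mat (2*n) (2*n)" "gm n i j (-c) \<in> carrier_mat (2*n) (2*n)" by (rule gm_carrier)+
  show "gm n i j c * gm n i j (-c) = 1\<^sub>m (2*n)" by (rule gm_inv[OF ij])
  show "gm n i j (-c) * gm n i j c = 1\<^sub>m (2*n)" using gm_inv[OF ij, of "-c"] by simp
  show "\<forall>u\<in>carrier_vec (2*n). ceq n (liftx n i j c * iota n u * liftx n i j (-c)) (iota n (gm n i j c *\<^sub>v u))"
    using liftx_conj[OF ij] by blast
  show "\<forall>u\<in>carrier_vec (2*n). ceq n (liftx n i j (-c) * iota n u * liftx n i j c) (iota n (gm n i j (-c) *\<^sub>v u))"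
    using liftx_conj[OF ij, of _ "-c"] by simp
qed

lemma ceq_sandwich: "c \<in> Fr n \<Longrightarrow> d \<in> Fr n \<Longrightarrow> ceq n p q \<Longrightarrow> ceq n (c * p * d) (c * q * d)"
  by (intro ceq_multR ceq_multL)

lemma ceq_cancel_mid: assumes "a \<in> Fr n" "b \<in> Fr n" "ceq n m 1" "ceq n (a * b) 1"
  shows "ceq n (a * m * b) 1"
proof -
  have "ceq n (a * m * b) (a * 1 * b)" by (rule ceq_sandwich[OF assms(1,2,3)])
  then show ?thesis using assms(4) by (simp add: ceq_trans)
qed

lemma mat_assoc4: assumes "A \<in> carrier_mat m m" "B \<in> carrier_mat m m" "C \<in> carrier_mat m m" "D \<in> carrier_mat m m"
  shows "(A * B) * (C * D) = A * ((B * C) * D)"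
  using assms by (simp add: assoc_mult_mat[of _ m m _ m _ m])

lemma LiftP_mult: assumes LA: "LiftP n A" and LB: "LiftP n B"
  shows "LiftP n (A * B :: 'a::comm_ring_1 mat)"
proof -
  from LA obtain x1 y1 A' where A: "x1 \<in> Fr n" "y1 \<in> Fr n" "x1 \<in> Ev" "y1 \<in> Ev"
    "ceq n (x1 * star x1) 1" "ceq n (y1 * star y1) 1" "ceq n (x1 * y1) 1" "ceq n (y1 * x1) 1"
    "A \<in> carrier_mat (2*n) (2*n)" "A' \<in> carrier_mat (2*n) (2*n)" "A * A' = 1\<^sub>m (2*n)" "A' * A = 1\<^sub>m (2*n)"
    "\<forall>u\<in>carrier_vec (2*n). ceq n (x1 * iota n u * y1) (iota n (A *\<^sub>v u))"
    "\<forall>u\<in>carrier_vec (2*n). ceq n (y1 * iota n u * x1) (iota n (A' *\<^sub>v u))"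
    unfolding LiftP_def by blast
  from LB obtain x2 y2 B' where B: "x2 \<in> Fr n" "y2 \<in> Fr n" "x2 \<in> Ev" "y2 \<in> Ev"
    "ceq n (x2 * star x2) 1" "ceq n (y2 * star y2) 1" "ceq n (x2 * y2) 1" "ceq n (y2 * x2) 1"
    "B \<in> carrier_mat (2*n) (2*n)" "B' \<in> carrier_mat (2*n) (2*n)" "B * B' = 1\<^sub>m (2*n)" "B' * B = 1\<^sub>m (2*n)"
    "\<forall>u\<in>carrier_vec (2*n). ceq n (x2 * iota n u * y2) (iota n (B *\<^sub>v u))"
    "\<forall>u\<in>carrier_vec (2*n). ceq n (y2 * iota n u * x2) (iota n (B' *\<^sub>v u))"
    unfolding LiftP_def by blast
  show ?thesis unfolding LiftP_def
  proof (rule exI[of _ "x1 * x2"], rule exI[of _ "y2 * y1"], rule exI[of _ "B' * A'"], intro conjI ballI)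
    show "x1 * x2 \<in> Fr n" "y2 * y1 \<in> Fr n" using A B by auto
    show "x1 * x2 \<in> Ev" "y2 * y1 \<in> Ev" using A B by (auto intro: Ev_mult)
    show "ceq n (x1 * x2 * star (x1 * x2)) 1"
      using ceq_cancel_mid[OF A(1) Fr_star[OF A(1)] B(5) A(5)] by (simp add: star_mult mult.assoc)
    show "ceq n (y2 * y1 * star (y2 * y1)) 1"
      using ceq_cancel_mid[OF B(2) Fr_star[OF B(2)] A(6) B(6)] by (simp add: star_mult mult.assoc)
    show "ceq n (x1 * x2 * (y2 * y1)) 1"
      using ceq_cancel_mid[OF A(1) A(2) B(7) A(7)] by (simp add: mult.assoc)
    show "ceq n (y2 * y1 * (x1 * x2)) 1"
      using ceq_cancel_mid[OF B(2) B(1) A(8) B(8)] by (simp add: mult.assoc)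
    show "A * B \<in> carrier_mat (2*n) (2*n)" "B' * A' \<in> carrier_mat (2*n) (2*n)" using A B by auto
    show "A * B * (B' * A') = 1\<^sub>m (2*n)" using A B by (simp add: mat_assoc4[of _ "2*n"])
    show "B' * A' * (A * B) = 1\<^sub>m (2*n)" using A B by (simp add: mat_assoc4[of _ "2*n"])
  next
    fix u :: "'a vec" assume u: "u \<in> carrier_vec (2*n)"
    have Bu: "B *\<^sub>v u \<in> carrier_vec (2*n)" using B(9) u by auto
    have "ceq n (x1 * (x2 * iota n u * y2) * y1) (x1 * iota n (B *\<^sub>v u) * y1)"
      using ceq_sandwich[OF A(1) A(2)] B(13) u by blast
    moreover have "ceq n (x1 * iota n (B *\<^sub>v u) * y1) (iota n (A *\<^sub>v (B *\<^sub>v u)))"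
      using A(13) Bu by blast
    ultimately have "ceq n (x1 * (x2 * iota n u * y2) * y1) (iota n (A *\<^sub>v (B *\<^sub>v u)))" by (rule ceq_trans)
    then show "ceq n (x1 * x2 * iota n u * (y2 * y1)) (iota n ((A * B) *\<^sub>v u))"
      using A(9) B(9) u by (simp add: mult.assoc op_mult_vec[of _ "2*n"])
  next
    fix u :: "'a vec" assume u: "u \<in> carrier_vec (2*n)"
    have Au: "A' *\<^sub>v u \<in> carrier_vec (2*n)" using A(10) u by auto
    have "ceq n (y2 * (y1 * iota n u * x1) * x2) (y2 * iota n (A' *\<^sub>v u) * x2)"
      using ceq_sandwich[OF B(2) B(1)] A(14) u by blast
    moreover have "ceq n (y2 * iota n (A' *\<^sub>v u) * x2) (iota n (B' *\<^sub>v (A' *\<^sub>v u)))"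
      using B(14) Au by blast
    ultimately have "ceq n (y2 * (y1 * iota n u * x1) * x2) (iota n (B' *\<^sub>v (A' *\<^sub>v u)))" by (rule ceq_trans)
    then show "ceq n (y2 * y1 * iota n u * (x1 * x2)) (iota n ((B' * A') *\<^sub>v u))"
      using A(10) B(10) u by (simp add: mult.assoc op_mult_vec[of _ "2*n"])
  qed
qed

lemma LiftP_EO: assumes "M \<in> EO n" shows "LiftP n (M :: 'a::comm_ring_1 mat)"
proof -
  have "M \<in> rm (2*n) (eo_gens n)" using assms EO_rm by blast
  then show ?thesis
  proof (induction M rule: rm.induct)
    case rm_one then show ?case by (rule LiftP_one)
  next
    case (rm_mult A s)
    then obtain i j c where "s = gm n i j c" "i < 2*n" "j < 2*n" "i \<noteq> j" by (auto simp: eo_gens_gm)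
    then show ?case using LiftP_mult[OF rm_mult.IH LiftP_gm] by simp
  qed
qed

lemma epin_of_EO: assumes M: "M \<in> EO n" shows "\<exists>x y. epin_mat n x y (M :: 'a::comm_ring_1 mat)"
proof -
  from LiftP_EO[OF M] obtain x y M' where L: "x \<in> Fr n" "y \<in> Fr n" "x \<in> Ev" "y \<in> Ev"
    "ceq n (x * star x) 1" "ceq n (y * star y) 1" "ceq n (x * y) 1" "ceq n (y * x) 1"
    "M \<in> carrier_mat (2*n) (2*n)" "M' \<in> carrier_mat (2*n) (2*n)" "M * M' = 1\<^sub>m (2*n)" "M' * M = 1\<^sub>m (2*n)"
    "\<forall>u\<in>carrier_vec (2*n). ceq n (x * iota n u * y) (iota n (M *\<^sub>v u))"
    "\<forall>u\<in>carrier_vec (2*n). ceq n (y * iota n u * x) (iota n (M' *\<^sub>v u))"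
    unfolding LiftP_def by blast
  have conv: "cl_eq n (Rep_FA x \<otimes>\<^sub>f fa_iota n u \<otimes>\<^sub>f Rep_FA y) (fa_iota n v) \<longleftrightarrow> ceq n (x * iota n u * y) (iota n v)" for u v
    by (simp add: cl_eq_ceq[symmetric] Rep_FA_ops Rep_iota)
  have "epin_mat n (Rep_FA x) (Rep_FA y) M"
    unfolding epin_mat_def spin_rep_def
  proof (intro conjI ballI)
    show "Rep_FA x \<in> fa_free n" "Rep_FA y \<in> fa_free n" using L(1,2) by (simp_all add: Fr_def)
    show "\<forall>w. Rep_FA x w \<noteq> 0 \<longrightarrow> even (length w)" using L(3) by (simp add: Ev_def)
    show "cl_eq n (Rep_FA x \<otimes>\<^sub>f fa_star (Rep_FA x)) fa_one"
      using L(5) by (simp add: cl_eq_ceq[symmetric] Rep_FA_ops Rep_star)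
    show "cl_eq n (Rep_FA x \<otimes>\<^sub>f Rep_FA y) fa_one" using L(7) by (simp add: cl_eq_ceq[symmetric] Rep_FA_ops)
    show "cl_eq n (Rep_FA y \<otimes>\<^sub>f Rep_FA x) fa_one" using L(8) by (simp add: cl_eq_ceq[symmetric] Rep_FA_ops)
    show "M \<in> carrier_mat (2*n) (2*n)" by (rule L(9))
    show "M \<in> EO n" by (rule M)
  next
    fix u :: "'a vec" assume u: "u \<in> carrier_vec (2*n)"
    show "cl_eq n (Rep_FA x \<otimes>\<^sub>f fa_iota n u \<otimes>\<^sub>f Rep_FA y) (fa_iota n (M *\<^sub>v u))"
      unfolding conv using L(13) u by blast
    show "\<exists>u'\<in>carrier_vec (2*n). cl_eq n (Rep_FA x \<otimes>\<^sub>f fa_iota n u \<otimes>\<^sub>f Rep_FA y) (fa_iota n u')"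
      unfolding conv using L(13) L(9) u by (intro bexI[of _ "M *\<^sub>v u"]) auto
  next
    fix u' :: "'a vec" assume u': "u' \<in> carrier_vec (2*n)"
    have Mu: "M' *\<^sub>v u' \<in> carrier_vec (2*n)" using L(10) u' by auto
    have "M *\<^sub>v (M' *\<^sub>v u') = u'" using L(9,10,11) u' by (simp add: op_mult_vec[of _ "2*n", symmetric])
    then show "\<exists>u\<in>carrier_vec (2*n). cl_eq n (Rep_FA x \<otimes>\<^sub>f fa_iota n u \<otimes>\<^sub>f Rep_FA y) (fa_iota n u')"
      unfolding conv using L(13) Mu by (intro bexI[of _ "M' *\<^sub>v u'"]) auto
  qed
  then show ?thesis by blast
qed

lemma Epin_orbit_EO_orbit: "Epin_orbit n p = EO_orbit n (p :: 'a::comm_ring_1 vec)"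
  unfolding Epin_orbit_def EO_orbit_def epin_mat_def using epin_of_EO
  by (auto simp: epin_mat_def) blast


lemma vec_first_app: "v \<in> carrier_vec n \<Longrightarrow> vec_first (v @\<^sub>v w) n = v"
  by (rule eq_vecI) (auto simp: vec_first_def)

lemma vec_last_app: "v \<in> carrier_vec n \<Longrightarrow> w \<in> carrier_vec n \<Longrightarrow> vec_last (v @\<^sub>v w) n = w"
  by (rule eq_vecI) (auto simp: vec_last_def)

lemma qform_app: assumes v: "v \<in> carrier_vec n" and w: "w \<in> carrier_vec n"
  shows "qform n (v @\<^sub>v w) = v \<bullet> w"
  unfolding qform_def scalar_prod_def using v w
  by (simp add: atLeast0LessThan)

lemma bil_comm: "u \<in> carrier_vec (2*n) \<Longrightarrow> v \<in> carrier_vec (2*n) \<Longrightarrow> bil n u v = bil n v u"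
  unfolding bil_def by (simp add: comm_add_vec[of _ "2*n"] algebra_simps)

lemma q_add: "qform n (u + z) = qform n u + qform n z + bil n u z"
  unfolding bil_def by simp

lemma bil_lin: assumes u: "u \<in> carrier_vec (2*n)" and v: "v \<in> carrier_vec (2*n)" and w: "w \<in> carrier_vec (2*n)"
  shows "bil n u (a \<cdot>\<^sub>v v + b \<cdot>\<^sub>v w) = a * bil n u v + b * bil n u w"
proof -
  have c: "a \<cdot>\<^sub>v v + b \<cdot>\<^sub>v w \<in> carrier_vec (2*n)" using v w by auto
  have "bil n u (a \<cdot>\<^sub>v v + b \<cdot>\<^sub>v w) = (\<Sum>k<n. a * (u $ k * v $ (n+k) + v $ k * u $ (n+k)) + b * (u $ k * w $ (n+k) + w $ k * u $ (n+k)))"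
    unfolding bil_sum[OF u c] using v w by (intro sum.cong) (auto simp: algebra_simps)
  also have "\<dots> = a * bil n u v + b * bil n u w"
    unfolding bil_sum[OF u v] bil_sum[OF u w] by (simp add: sum.distrib sum_distrib_left distrib_left)
  finally show ?thesis .
qed

lemma q_smult: "qform n (a \<cdot>\<^sub>v v) = a * a * qform n v" if "v \<in> carrier_vec (2*n)"
  unfolding qform_def using that by (simp add: sum_distrib_left algebra_simps)

lemma bil_smult: assumes u: "u \<in> carrier_vec (2*n)" and v: "v \<in> carrier_vec (2*n)"
  shows "bil n u (a \<cdot>\<^sub>v v) = a * bil n u v"
proof -
  have c: "a \<cdot>\<^sub>v v \<in> carrier_vec (2*n)" using v by auto
  have "bil n u (a \<cdot>\<^sub>v v) = (\<Sum>k<n. a * (u $ k * v $ (n+k) + v $ k * u $ (n+k)))"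
    unfolding bil_sum[OF u c] using v by (intro sum.cong) (auto simp: algebra_simps)
  then show ?thesis unfolding bil_sum[OF u v] by (simp add: sum_distrib_left)
qed

lemma gm_q: fixes u :: "'a::comm_ring_1 vec" assumes u: "u \<in> carrier_vec (2*n)" and ij: "i < 2*n" "j < 2*n" "i \<noteq> j"
  shows "qform n (gm n i j c *\<^sub>v u) = qform n u"
proof -
  have h: "hpart n i < 2*n" "hpart n j < 2*n" using ij hpart_lt by auto
  define \<alpha> where "\<alpha> = c * u $ j"
  define \<beta> where "\<beta> = - (c * u $ hpart n i)"
  define z where "z = \<alpha> \<cdot>\<^sub>v ub n i + \<beta> \<cdot>\<^sub>v ub n (hpart n j)"
  have zc: "z \<in> carrier_vec (2*n)" unfolding z_def by auto
  have g: "gm n i j c *\<^sub>v u = u + z"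
    unfolding gm_vec[OF u ij(1,2)] z_def \<alpha>_def \<beta>_def using u by (simp add: assoc_add_vec[of _ "2*n"])
  have b0: "bil n (ub n i) (ub n (hpart n j)) = (0::'a)"
    using bil_ub[OF ij(1) ub_carrier, of "hpart n j"] h hpart_inj[OF ij(1) ij(2)] ij(3)
    by (simp add: ub_index)
  have qz: "qform n z = 0"
  proof -
    have "qform n z = qform n (\<alpha> \<cdot>\<^sub>v ub n i) + qform n (\<beta> \<cdot>\<^sub>v ub n (hpart n j)) + bil n (\<alpha> \<cdot>\<^sub>v ub n i) (\<beta> \<cdot>\<^sub>v ub n (hpart n j))"
      unfolding z_def by (rule q_add)
    also have "bil n (\<alpha> \<cdot>\<^sub>v ub n i) (\<beta> \<cdot>\<^sub>v ub n (hpart n j)) = \<beta> * (\<alpha> * bil n (ub n i) (ub n (hpart n j)))"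
    proof -
      have "bil n (\<alpha> \<cdot>\<^sub>v ub n i) (\<beta> \<cdot>\<^sub>v ub n (hpart n j)) = \<beta> * bil n (\<alpha> \<cdot>\<^sub>v ub n i) (ub n (hpart n j))"
        by (rule bil_smult) auto
      also have "bil n (\<alpha> \<cdot>\<^sub>v ub n i) (ub n (hpart n j)) = bil n (ub n (hpart n j)) (\<alpha> \<cdot>\<^sub>v ub n i)"
        by (rule bil_comm) auto
      also have "\<dots> = \<alpha> * bil n (ub n (hpart n j)) (ub n i)"
        by (rule bil_smult) auto
      also have "bil n (ub n (hpart n j)) (ub n i) = bil n (ub n i) (ub n (hpart n j))"
        by (rule bil_comm) auto
      finally show ?thesis .
    qed
    finally show ?thesis using b0 by (simp add: q_smult qform_ub)
  qed
  have bz: "bil n u z = 0"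
  proof -
    have "bil n u z = \<alpha> * bil n u (ub n i) + \<beta> * bil n u (ub n (hpart n j))"
      unfolding z_def by (rule bil_lin[OF u ub_carrier ub_carrier])
    also have "\<dots> = \<alpha> * u $ hpart n i + \<beta> * u $ j"
      using bil_ub[OF ij(1) u] bil_ub[OF h(2) u] hpart_hpart[OF ij(2)]
        bil_comm[OF u ub_carrier, of i] bil_comm[OF u ub_carrier, of "hpart n j"] by simp
    finally show ?thesis by (simp add: \<alpha>_def \<beta>_def)
  qed
  show ?thesis unfolding g q_add qz bz by simp
qed

lemma rowmul_mult: assumes "A \<in> carrier_mat n n" "B \<in> carrier_mat n n" "v \<in> carrier_vec n"
  shows "rowmul (rowmul v A) B = rowmul v (A * B)"
  unfolding rowmul_def using assms by (simp add: transpose_mult[of _ n n _ n] assoc_mult_mat_vec[of _ n n _ n])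

lemma rowmul_one: "v \<in> carrier_vec n \<Longrightarrow> rowmul v (1\<^sub>m n) = v"
  unfolding rowmul_def by simp

lemma en_transpose: "transpose_mat (en n i j c) = en n j i c"
  by (rule eq_matI) (auto simp: en_def emat_def)

lemma app_carrier2: "v \<in> carrier_vec n \<Longrightarrow> w \<in> carrier_vec n \<Longrightarrow> v @\<^sub>v w \<in> carrier_vec (2*n)"
  using append_carrier_vec[of v n w n] by (simp add: mult_2)

lemma split2: "p \<in> carrier_vec (2*n) \<Longrightarrow> p = vec_first p n @\<^sub>v vec_last p n"
  using vec_first_last_append[of p n n] by (simp add: mult_2)

lemma app_index: "v \<in> carrier_vec n \<Longrightarrow> w \<in> carrier_vec n \<Longrightarrow> t < 2*n \<Longrightarrow>
   (v @\<^sub>v w) $ t = (if t < n then v $ t else w $ (t - n))"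
  by simp

lemma first_gm: assumes v: "v \<in> carrier_vec n" and w: "w \<in> carrier_vec n" and ij: "i < 2*n" "j < 2*n"
  shows "vec_first (gm n i j c *\<^sub>v (v @\<^sub>v w)) n = vec n (\<lambda>k. v $ k + c * ((if k = i then (v @\<^sub>v w) $ j else 0)
      - (if k = hpart n j then (v @\<^sub>v w) $ (hpart n i) else 0)))"
proof (rule eq_vecI)
  fix k assume "k < dim_vec (vec n (\<lambda>k. v $ k + c * ((if k = i then (v @\<^sub>v w) $ j else 0)
      - (if k = hpart n j then (v @\<^sub>v w) $ (hpart n i) else 0))))"
  then have k: "k < n" by simp
  have k2: "k < 2*n" using k by simp
  show "vec_first (gm n i j c *\<^sub>v (v @\<^sub>v w)) n $ k = vec n (\<lambda>k. v $ k + c * ((if k = i then (v @\<^sub>v w) $ j else 0)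
      - (if k = hpart n j then (v @\<^sub>v w) $ (hpart n i) else 0))) $ k"
    using gm_vec_index[OF app_carrier2[OF v w] k2 ij, of c] k v w by (simp add: vec_first_def)
qed simp

lemma fwd_gm_a: assumes v: "v \<in> carrier_vec n" and w: "w \<in> carrier_vec n" and ij: "i < n" "j < n"
  shows "vec_first (gm n i j c *\<^sub>v (v @\<^sub>v w)) n = rowmul v (en n j i c)"
proof -
  have "rowmul v (en n j i c) = v + (c * v $ j) \<cdot>\<^sub>v unit_vec n i"
    unfolding rowmul_def en_transpose using en_vec[OF v ij] .
  moreover have "vec_first (gm n i j c *\<^sub>v (v @\<^sub>v w)) n = v + (c * v $ j) \<cdot>\<^sub>v unit_vec n i"
  proof -
    have i2: "i < 2*n" "j < 2*n" using ij by auto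
    show ?thesis unfolding first_gm[OF v w i2] using ij v w by (intro eq_vecI) (auto simp: hpart_def)
  qed
  ultimately show ?thesis by simp
qed

lemma fwd_gm_b: assumes v: "v \<in> carrier_vec n" and w: "w \<in> carrier_vec n" and ij: "n \<le> i" "n \<le> j" "i < 2*n" "j < 2*n"
  shows "vec_first (gm n i j c *\<^sub>v (v @\<^sub>v w)) n = rowmul v (en n (i-n) (j-n) (-c))"
proof -
  have ij': "j - n < n" "i - n < n" using ij by auto
  have "rowmul v (en n (i-n) (j-n) (-c)) = v + (- c * v $ (i-n)) \<cdot>\<^sub>v unit_vec n (j-n)"
    unfolding rowmul_def en_transpose using en_vec[OF v ij'] .
  moreover have "vec_first (gm n i j c *\<^sub>v (v @\<^sub>v w)) n = v + (- c * v $ (i-n)) \<cdot>\<^sub>v unit_vec n (j-n)"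
    unfolding first_gm[OF v w ij(3,4)] using ij v w by (intro eq_vecI) (auto simp: hpart_def)
  ultimately show ?thesis by simp
qed

lemma fwd_gm_c: assumes v: "v \<in> carrier_vec n" and w: "w \<in> carrier_vec n" and vw: "v \<bullet> w = 1"
  and ij: "i < n" "n \<le> j" "j < 2*n" "j \<noteq> i + n"
  shows "vec_first (gm n i j c *\<^sub>v (v @\<^sub>v w)) n =
    rowmul v (1\<^sub>m n + outer n (c \<cdot>\<^sub>v w) ((w $ (j-n)) \<cdot>\<^sub>v unit_vec n i + (- (w $ i)) \<cdot>\<^sub>v unit_vec n (j-n)))"
proof -
  let ?y = "(w $ (j-n)) \<cdot>\<^sub>v unit_vec n i + (- (w $ i)) \<cdot>\<^sub>v unit_vec n (j-n)"
  have j': "j - n < n" using ij by auto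
  have wv: "w \<bullet> v = 1" using vw comm_scalar_prod[OF v w] by simp
  have "rowmul v (1\<^sub>m n + outer n (c \<cdot>\<^sub>v w) ?y) = v + ((c \<cdot>\<^sub>v w) \<bullet> v) \<cdot>\<^sub>v ?y"
    unfolding rowmul_def op_transpose using op_vec[of ?y n "c \<cdot>\<^sub>v w" v] v w by auto
  also have "\<dots> = v + c \<cdot>\<^sub>v ?y" using wv v w by simp
  finally have r: "rowmul v (1\<^sub>m n + outer n (c \<cdot>\<^sub>v w) ?y) = v + c \<cdot>\<^sub>v ?y" .
  have "vec_first (gm n i j c *\<^sub>v (v @\<^sub>v w)) n = v + c \<cdot>\<^sub>v ?y"
  proof -
    have i2: "i < 2*n" using ij by auto
    show ?thesis unfolding first_gm[OF v w i2 ij(3)] using ij j' v w by (intro eq_vecI) (auto simp: hpart_def algebra_simps)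
  qed
  then show ?thesis using r by simp
qed

lemma fwd_gm_triv: assumes v: "v \<in> carrier_vec n" and w: "w \<in> carrier_vec n" and ij: "i < 2*n" "j < 2*n"
  and c: "(n \<le> i \<and> j < n) \<or> (i < n \<and> j = i + n)"
  shows "vec_first (gm n i j c *\<^sub>v (v @\<^sub>v w)) n = rowmul v (1\<^sub>m n)"
  unfolding first_gm[OF v w ij] rowmul_one[OF v] using ij v w c by (intro eq_vecI) (auto simp: hpart_def)

lemma fwd_gm: assumes n3: "3 \<le> n" and v: "v \<in> carrier_vec n" and w: "w \<in> carrier_vec n" and vw: "v \<bullet> w = 1"
  and ij: "i < 2*n" "j < 2*n" "i \<noteq> j"
  shows "\<exists>\<epsilon>\<in>En n. vec_first (gm n i j c *\<^sub>v (v @\<^sub>v w)) n = rowmul v \<epsilon>"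
proof (cases "i < n")
  case True
  show ?thesis
  proof (cases "j < n")
    case True
    then show ?thesis using fwd_gm_a[OF v w \<open>i < n\<close> True] en_in_En[of j n i c] \<open>i < n\<close> ij(3) by auto
  next
    case False
    show ?thesis
    proof (cases "j = i + n")
      case True
      then show ?thesis using fwd_gm_triv[OF v w ij(1,2)] \<open>i < n\<close> En_one by blast
    next
      case ne: False
      have "1\<^sub>m n + outer n (c \<cdot>\<^sub>v w) ((w $ (j-n)) \<cdot>\<^sub>v unit_vec n i + (- (w $ i)) \<cdot>\<^sub>v unit_vec n (j-n)) \<in> En n"
        using suslin[OF n3 w, of i "j-n" c] \<open>i < n\<close> False ij ne by auto
      then show ?thesis using fwd_gm_c[OF v w vw \<open>i < n\<close> _ ij(2) ne] False by auto
    qed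
  qed
next
  case False
  show ?thesis
  proof (cases "j < n")
    case True
    then show ?thesis using fwd_gm_triv[OF v w ij(1,2)] False En_one by auto
  next
    case jn: False
    have "en n (i-n) (j-n) (-c) \<in> En n" using False jn ij by (intro en_in_En) auto
    then show ?thesis using fwd_gm_b[OF v w _ _ ij(1,2)] False jn by auto
  qed
qed

lemma EO_q: assumes M: "M \<in> EO n" and p: "p \<in> carrier_vec (2*n)"
  shows "qform n (M *\<^sub>v p) = qform n (p :: 'a::comm_ring_1 vec)"
proof -
  have "M \<in> rm (2*n) (eo_gens n)" using M EO_rm by blast
  then show ?thesis using p
  proof (induction M arbitrary: p rule: rm.induct)
    case rm_one then show ?case by simp
  next
    case (rm_mult A s)
    obtain i j c where s: "s = gm n i j c" "i < 2*n" "j < 2*n" "i \<noteq> j" using rm_mult.hyps(2) by (auto simp: eo_gens_gm)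
    have Ac: "A \<in> carrier_mat (2*n) (2*n)" using rm_carrier[OF EO_ginv rm_mult.hyps(1)] .
    have sp: "s *\<^sub>v p \<in> carrier_vec (2*n)" unfolding s(1) by (rule mult_mat_vec_carrier[OF gm_carrier rm_mult.prems])
    have "(A * s) *\<^sub>v p = A *\<^sub>v (s *\<^sub>v p)" unfolding s(1) by (rule op_mult_vec[OF Ac gm_carrier rm_mult.prems])
    then show ?case using rm_mult.IH[OF sp] gm_q[OF rm_mult.prems s(2-4)] s by simp
  qed
qed

lemma EO_fwd: assumes n3: "3 \<le> n" and M: "M \<in> EO n"
  shows "v \<in> carrier_vec n \<Longrightarrow> w \<in> carrier_vec n \<Longrightarrow> v \<bullet> w = 1 \<Longrightarrow>
    \<exists>\<epsilon>\<in>En n. vec_first (M *\<^sub>v (v @\<^sub>v w)) n = rowmul v (\<epsilon> :: 'a::comm_ring_1 mat)"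
proof -
  have "M \<in> rm (2*n) (eo_gens n)" using M EO_rm by blast
  then show "v \<in> carrier_vec n \<Longrightarrow> w \<in> carrier_vec n \<Longrightarrow> v \<bullet> w = 1 \<Longrightarrow> ?thesis"
  proof (induction M arbitrary: v w rule: rm.induct)
    case rm_one
    then show ?case by (intro bexI[of _ "1\<^sub>m n"]) (auto simp: app_carrier2 vec_first_app rowmul_one En_one)
  next
    case (rm_mult A s)
    obtain i j c where s: "s = gm n i j c" "i < 2*n" "j < 2*n" "i \<noteq> j" using rm_mult.hyps(2) by (auto simp: eo_gens_gm)
    have Ac: "A \<in> carrier_mat (2*n) (2*n)" using rm_carrier[OF EO_ginv rm_mult.hyps(1)] .
    have p: "v @\<^sub>v w \<in> carrier_vec (2*n)" using rm_mult.prems by (simp add: app_carrier2)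
    define p' where "p' = s *\<^sub>v (v @\<^sub>v w)"
    have p'c: "p' \<in> carrier_vec (2*n)" unfolding p'_def s(1) by (rule mult_mat_vec_carrier[OF gm_carrier p])
    define v' where "v' = vec_first p' n"
    define w' where "w' = vec_last p' n"
    have pv: "p' = v' @\<^sub>v w'" unfolding v'_def w'_def by (rule split2[OF p'c])
    have v'c: "v' \<in> carrier_vec n" "w' \<in> carrier_vec n" unfolding v'_def w'_def by auto
    have "v' \<bullet> w' = 1"
    proof -
      have "v' \<bullet> w' = qform n p'" using pv qform_app[OF v'c] by simp
      also have "\<dots> = qform n (v @\<^sub>v w)" unfolding p'_def s(1) by (rule gm_q[OF p s(2-4)])
      also have "\<dots> = 1" using qform_app[OF rm_mult.prems(1,2)] rm_mult.prems(3) by simp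
      finally show ?thesis .
    qed
    from rm_mult.IH[OF v'c this] obtain \<epsilon>2 where e2: "\<epsilon>2 \<in> En n" "vec_first (A *\<^sub>v (v' @\<^sub>v w')) n = rowmul v' \<epsilon>2" by blast
    from fwd_gm[OF n3 rm_mult.prems s(2-4), of c] obtain \<epsilon>1 where e1: "\<epsilon>1 \<in> En n" "v' = rowmul v \<epsilon>1"
      unfolding v'_def p'_def s(1) by blast
    have "(A * s) *\<^sub>v (v @\<^sub>v w) = A *\<^sub>v (v' @\<^sub>v w')"
      using op_mult_vec[OF Ac gm_carrier p, of i j c] pv s(1) unfolding p'_def by simp
    then have "vec_first ((A * s) *\<^sub>v (v @\<^sub>v w)) n = rowmul v (\<epsilon>1 * \<epsilon>2)"
      using e2 e1 rowmul_mult[OF En_carrier[OF e1(1)] En_carrier[OF e2(1)] rm_mult.prems(1)] by simp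
    then show ?case using En_mult[OF e1(1) e2(1)] by blast
  qed
qed

lemma bwd_E: assumes e: "\<epsilon> \<in> En n"
  shows "\<exists>M\<in>EO n. \<forall>v w. v \<in> carrier_vec n \<longrightarrow> w \<in> carrier_vec n \<longrightarrow>
     vec_first (M *\<^sub>v (v @\<^sub>v w)) n = rowmul v (\<epsilon> :: 'a::comm_ring_1 mat)"
proof -
  have "\<epsilon> \<in> rm n (elem_gens n)" using e gen_group_rm[OF En_ginv] unfolding En_def by blast
  then show ?thesis
  proof (induction \<epsilon> rule: rm.induct)
    case rm_one
    show ?case
      by (rule bexI[of _ "1\<^sub>m (2*n)"]) (auto simp: app_carrier2 vec_first_app rowmul_one EO_one)
  next
    case (rm_mult A s)
    obtain i j c where s: "s = en n i j c" "i < n" "j < n" "i \<noteq> j" using rm_mult.hyps(2) by (auto simp: elem_gens_en)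
    have Ac: "A \<in> carrier_mat n n" using rm_carrier[OF En_ginv rm_mult.hyps(1)] .
    from rm_mult.IH obtain M where M: "M \<in> EO n" "\<forall>v w. v \<in> carrier_vec n \<longrightarrow> w \<in> carrier_vec n \<longrightarrow>
     vec_first (M *\<^sub>v (v @\<^sub>v w)) n = rowmul v A" by blast
    have j2: "j < 2*n" "i < 2*n" using s by auto
    show ?case
    proof (rule bexI[of _ "gm n j i c * M"], intro allI impI)
      fix v w :: "'a vec" assume v: "v \<in> carrier_vec n" and w: "w \<in> carrier_vec n"
      have p: "v @\<^sub>v w \<in> carrier_vec (2*n)" using v w by (simp add: app_carrier2)
      define p' where "p' = M *\<^sub>v (v @\<^sub>v w)"
      have p'c: "p' \<in> carrier_vec (2*n)" unfolding p'_def using EO_carrier[OF M(1)] p by auto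
      have pv: "p' = vec_first p' n @\<^sub>v vec_last p' n" by (rule split2[OF p'c])
      have "(gm n j i c * M) *\<^sub>v (v @\<^sub>v w) = gm n j i c *\<^sub>v p'"
        unfolding p'_def by (rule op_mult_vec[OF gm_carrier EO_carrier[OF M(1)] p])
      also have "\<dots> = gm n j i c *\<^sub>v (vec_first p' n @\<^sub>v vec_last p' n)" using pv by simp
      finally have "vec_first ((gm n j i c * M) *\<^sub>v (v @\<^sub>v w)) n = rowmul (vec_first p' n) (en n i j c)"
        using fwd_gm_a[of "vec_first p' n" n "vec_last p' n" j i c] s by simp
      also have "vec_first p' n = rowmul v A" unfolding p'_def using M(2) v w by blast
      also have "rowmul (rowmul v A) (en n i j c) = rowmul v (A * s)"
        using rowmul_mult[OF Ac en_carrier v] s by simp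
      finally show "vec_first ((gm n j i c * M) *\<^sub>v (v @\<^sub>v w)) n = rowmul v (A * s)" .
    next
      show "gm n j i c * M \<in> EO n" using gm_in_EO[of j n i c] j2 s M(1) by (intro EO_mult) auto
    qed
  qed
qed

lemma gm_w: assumes v: "v \<in> carrier_vec n" and z: "z \<in> carrier_vec n" and ij: "i < n" "j < n"
  shows "gm n (i+n) j c *\<^sub>v (v @\<^sub>v z) = v @\<^sub>v (z + (c * v $ j) \<cdot>\<^sub>v unit_vec n i + (- (c * v $ i)) \<cdot>\<^sub>v unit_vec n j)"
proof (rule eq_vecI)
  fix k assume "k < dim_vec (v @\<^sub>v (z + (c * v $ j) \<cdot>\<^sub>v unit_vec n i + (- (c * v $ i)) \<cdot>\<^sub>v unit_vec n j))"
  then have k: "k < 2*n" using v by simp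
  have i2: "i + n < 2*n" "j < 2*n" using ij by auto
  show "(gm n (i+n) j c *\<^sub>v (v @\<^sub>v z)) $ k = (v @\<^sub>v (z + (c * v $ j) \<cdot>\<^sub>v unit_vec n i + (- (c * v $ i)) \<cdot>\<^sub>v unit_vec n j)) $ k"
    unfolding gm_vec_index[OF app_carrier2[OF v z] k i2] using v z k ij
    by (auto simp: hpart_def algebra_simps)
qed (use v z in simp)

definition bterm :: "(nat \<Rightarrow> nat \<Rightarrow> 'a::comm_ring_1) \<Rightarrow> 'a vec \<Rightarrow> nat \<Rightarrow> nat \<times> nat \<Rightarrow> 'a" where
  "bterm f v k ij = (case ij of (i,j) \<Rightarrow> f i j * (v $ j * (if k = i then 1 else 0) - v $ i * (if k = j then 1 else 0)))"

lemma bwd_sum: assumes v: "v \<in> carrier_vec n" and fin: "finite S" and sub: "S \<subseteq> {..<n} \<times> {..<n}"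
  shows "\<exists>M\<in>EO n. \<forall>z\<in>carrier_vec n. M *\<^sub>v (v @\<^sub>v z) = v @\<^sub>v (z + vec n (\<lambda>k. \<Sum>ij\<in>S. bterm f v k ij))"
  using fin sub
proof (induction S rule: finite_induct)
  case empty
  show ?case
  proof (rule bexI[of _ "1\<^sub>m (2*n)"], intro ballI)
    fix z :: "'a vec" assume z: "z \<in> carrier_vec n"
    have "z + vec n (\<lambda>k. \<Sum>ij\<in>{}. bterm f v k ij) = z" by (rule eq_vecI) (use z in auto)
    then show "1\<^sub>m (2*n) *\<^sub>v (v @\<^sub>v z) = v @\<^sub>v (z + vec n (\<lambda>k. \<Sum>ij\<in>{}. bterm f v k ij))"
      using v z by (simp add: app_carrier2)
  qed (rule EO_one)
next
  case (insert x S)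
  obtain i j where x: "x = (i,j)" by (cases x)
  have ij: "i < n" "j < n" using insert.prems x by auto
  from insert.IH insert.prems obtain M where M: "M \<in> EO n"
    "\<forall>z\<in>carrier_vec n. M *\<^sub>v (v @\<^sub>v z) = v @\<^sub>v (z + vec n (\<lambda>k. \<Sum>ij\<in>S. bterm f v k ij))" by auto
  have sins: "(\<Sum>ij\<in>insert x S. bterm f v k ij) = bterm f v k (i,j) + (\<Sum>ij\<in>S. bterm f v k ij)" for k
    using insert.hyps x by simp
  show ?case
  proof (cases "i = j")
    case True
    have "bterm f v k (i,j) = 0" for k using True by (simp add: bterm_def)
    then show ?thesis using M sins by auto
  next
    case False
    show ?thesis
    proof (rule bexI[of _ "M * gm n (i+n) j (f i j)"], intro ballI)
      fix z :: "'a vec" assume z: "z \<in> carrier_vec n"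
      define z1 where "z1 = z + (f i j * v $ j) \<cdot>\<^sub>v unit_vec n i + (- (f i j * v $ i)) \<cdot>\<^sub>v unit_vec n j"
      have z1c: "z1 \<in> carrier_vec n" unfolding z1_def using z by auto
      have "(M * gm n (i+n) j (f i j)) *\<^sub>v (v @\<^sub>v z) = M *\<^sub>v (gm n (i+n) j (f i j) *\<^sub>v (v @\<^sub>v z))"
        by (rule op_mult_vec[OF EO_carrier[OF M(1)] gm_carrier app_carrier2[OF v z]])
      also have "\<dots> = M *\<^sub>v (v @\<^sub>v z1)" unfolding z1_def using gm_w[OF v z ij] by simp
      also have "\<dots> = v @\<^sub>v (z1 + vec n (\<lambda>k. \<Sum>ij\<in>S. bterm f v k ij))" using M(2) z1c by blast
      also have "z1 + vec n (\<lambda>k. \<Sum>ij\<in>S. bterm f v k ij) = z + vec n (\<lambda>k. \<Sum>ij\<in>insert x S. bterm f v k ij)"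
        unfolding z1_def sins using z ij by (intro eq_vecI) (auto simp: bterm_def algebra_simps)
      finally show "(M * gm n (i+n) j (f i j)) *\<^sub>v (v @\<^sub>v z) = v @\<^sub>v (z + vec n (\<lambda>k. \<Sum>ij\<in>insert x S. bterm f v k ij))" .
    next
      show "M * gm n (i+n) j (f i j) \<in> EO n" using M(1) gm_in_EO[of "i+n" n j] ij by (intro EO_mult) auto
    qed
  qed
qed

lemma sp_sum: "w \<in> carrier_vec n \<Longrightarrow> v \<bullet> w = (\<Sum>i<n. v $ i * w $ i)"
  unfolding scalar_prod_def by (simp add: atLeast0LessThan)

lemma bwd_w: assumes v: "v \<in> carrier_vec n" and w: "w \<in> carrier_vec n" and w': "w' \<in> carrier_vec n"
  and vw: "v \<bullet> w = 1" and vw': "v \<bullet> w' = 1"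
  shows "\<exists>M\<in>EO n. M *\<^sub>v (v @\<^sub>v w) = v @\<^sub>v (w' :: 'a::comm_ring_1 vec)"
proof -
  define d where "d = w' - w"
  define f where "f = (\<lambda>i j. d $ i * w $ j)"
  obtain M where M: "M \<in> EO n" "\<forall>z\<in>carrier_vec n. M *\<^sub>v (v @\<^sub>v z) = v @\<^sub>v (z + vec n (\<lambda>k. \<Sum>ij\<in>{..<n} \<times> {..<n}. bterm f v k ij))"
    using bwd_sum[OF v, of "{..<n} \<times> {..<n}" f] by auto
  have s1: "(\<Sum>j<n. w $ j * v $ j) = 1" using vw sp_sum[OF w, of v] by (simp add: mult.commute)
  have s2: "(\<Sum>i<n. d $ i * v $ i) = 0"
  proof -
    have "(\<Sum>i<n. d $ i * v $ i) = (\<Sum>i<n. v $ i * w' $ i) - (\<Sum>i<n. v $ i * w $ i)"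
      unfolding d_def using w w' by (simp add: sum_subtractf[symmetric] algebra_simps)
    then show ?thesis using vw vw' sp_sum[OF w, of v] sp_sum[OF w', of v] by simp
  qed
  have "w + vec n (\<lambda>k. \<Sum>ij\<in>{..<n} \<times> {..<n}. bterm f v k ij) = w'"
  proof (rule eq_vecI)
    fix k assume "k < dim_vec w'" then have k: "k < n" using w' by simp
    have "(\<Sum>ij\<in>{..<n} \<times> {..<n}. bterm f v k ij) = (\<Sum>i<n. \<Sum>j<n. bterm f v k (i,j))"
      by (simp add: sum.cartesian_product)
    also have "\<dots> = (\<Sum>i<n. (\<Sum>j<n. (if k = i then d $ i * (w $ j * v $ j) else 0)) - (\<Sum>j<n. (if k = j then w $ k * (d $ i * v $ i) else 0)))"
    proof (rule sum.cong[OF refl])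
      fix i
      show "(\<Sum>j<n. bterm f v k (i,j)) = (\<Sum>j<n. (if k = i then d $ i * (w $ j * v $ j) else 0)) - (\<Sum>j<n. (if k = j then w $ k * (d $ i * v $ i) else 0))"
        unfolding sum_subtractf[symmetric] by (rule sum.cong[OF refl]) (auto simp: bterm_def f_def algebra_simps)
    qed
    also have "\<dots> = (\<Sum>i<n. \<Sum>j<n. (if k = i then d $ i * (w $ j * v $ j) else 0)) - (\<Sum>i<n. \<Sum>j<n. (if k = j then w $ k * (d $ i * v $ i) else 0))"
      by (simp add: sum_subtractf)
    also have "(\<Sum>i<n. \<Sum>j<n. (if k = i then d $ i * (w $ j * v $ j) else 0)) = (\<Sum>i<n. (if k = i then d $ i * (\<Sum>j<n. w $ j * v $ j) else 0))"
      by (rule sum.cong[OF refl]) (simp add: sum_distrib_left)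
    also have "(\<Sum>i<n. \<Sum>j<n. (if k = j then w $ k * (d $ i * v $ i) else 0)) = (\<Sum>i<n. w $ k * (d $ i * v $ i))"
      using k by (simp add: sum.delta)
    also have "(\<Sum>i<n. (if k = i then d $ i * (\<Sum>j<n. w $ j * v $ j) else 0)) - (\<Sum>i<n. w $ k * (d $ i * v $ i))
       = d $ k * (\<Sum>j<n. w $ j * v $ j) - w $ k * (\<Sum>i<n. d $ i * v $ i)"
      using k by (simp add: sum_distrib_left[symmetric] sum.delta)
    also have "\<dots> = d $ k" using s1 s2 by simp
    finally show "(w + vec n (\<lambda>k. \<Sum>ij\<in>{..<n} \<times> {..<n}. bterm f v k ij)) $ k = w' $ k"
      using k w w' by (simp add: d_def)
  qed (use w w' in simp)
  then show ?thesis using M w by auto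
qed

lemma EO_orbit_self: "p \<in> carrier_vec (2*n) \<Longrightarrow> p \<in> EO_orbit n p"
  unfolding EO_orbit_def using EO_one by force

lemma EO_orbit_eq: assumes p: "p \<in> carrier_vec (2*n)" and q: "q \<in> EO_orbit n (p :: 'a::comm_ring_1 vec)"
  shows "EO_orbit n q = EO_orbit n p"
proof -
  obtain M where M: "M \<in> EO n" "q = M *\<^sub>v p" using q unfolding EO_orbit_def by blast
  obtain M' where M': "M' \<in> EO n" "M' * M = 1\<^sub>m (2*n)" using EO_inv[OF M(1)] by blast
  have Mc: "M \<in> carrier_mat (2*n) (2*n)" "M' \<in> carrier_mat (2*n) (2*n)" using M M' EO_carrier by auto
  show ?thesis
  proof
    show "EO_orbit n q \<subseteq> EO_orbit n p"
    proof
      fix r assume "r \<in> EO_orbit n q"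
      then obtain N where N: "N \<in> EO n" "r = N *\<^sub>v q" unfolding EO_orbit_def by blast
      have "r = (N * M) *\<^sub>v p" using N M Mc EO_carrier[OF N(1)] p by (simp add: op_mult_vec[of _ "2*n"])
      then show "r \<in> EO_orbit n p" unfolding EO_orbit_def using EO_mult[OF N(1) M(1)] by blast
    qed
  next
    show "EO_orbit n p \<subseteq> EO_orbit n q"
    proof
      fix r assume "r \<in> EO_orbit n p"
      then obtain N where N: "N \<in> EO n" "r = N *\<^sub>v p" unfolding EO_orbit_def by blast
      have Nc: "N \<in> carrier_mat (2*n) (2*n)" using EO_carrier[OF N(1)] .
      have "(N * M') *\<^sub>v q = N *\<^sub>v (M' *\<^sub>v (M *\<^sub>v p))" using M Mc Nc p by (simp add: op_mult_vec[of _ "2*n"])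
      also have "M' *\<^sub>v (M *\<^sub>v p) = p" using M' Mc p by (simp add: op_mult_vec[of _ "2*n", symmetric])
      finally have "r = (N * M') *\<^sub>v q" using N by simp
      then show "r \<in> EO_orbit n q" unfolding EO_orbit_def using EO_mult[OF N(1) M'(1)] by blast
    qed
  qed
qed

lemma E_orbit_self: "v \<in> carrier_vec n \<Longrightarrow> v \<in> E_orbit n v"
  unfolding E_orbit_def using En_one rowmul_one by force

lemma E_orbit_eq: assumes v: "v \<in> carrier_vec n" and q: "v' \<in> E_orbit n (v :: 'a::comm_ring_1 vec)"
  shows "E_orbit n v' = E_orbit n v"
proof -
  obtain e where e: "e \<in> En n" "v' = rowmul v e" using q unfolding E_orbit_def by blast
  obtain e' where e': "e' \<in> En n" "e * e' = 1\<^sub>m n" using En_inv[OF e(1)] by blast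
  have ec: "e \<in> carrier_mat n n" "e' \<in> carrier_mat n n" using e e' En_carrier by auto
  show ?thesis
  proof
    show "E_orbit n v' \<subseteq> E_orbit n v"
    proof
      fix r assume "r \<in> E_orbit n v'"
      then obtain d where d: "d \<in> En n" "r = rowmul v' d" unfolding E_orbit_def by blast
      have "r = rowmul v (e * d)" using d e rowmul_mult[OF ec(1) En_carrier[OF d(1)] v] by simp
      then show "r \<in> E_orbit n v" unfolding E_orbit_def using En_mult[OF e(1) d(1)] by blast
    qed
  next
    show "E_orbit n v \<subseteq> E_orbit n v'"
    proof
      fix r assume "r \<in> E_orbit n v"
      then obtain d where d: "d \<in> En n" "r = rowmul v d" unfolding E_orbit_def by blast
      have dc: "d \<in> carrier_mat n n" using En_carrier[OF d(1)] .
      have "rowmul v' (e' * d) = rowmul v (e * (e' * d))"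
        using e rowmul_mult[OF ec(1) mult_carrier_mat[OF ec(2) dc] v] by simp
      also have "e * (e' * d) = d" using e' ec dc by (simp add: assoc_mult_mat[symmetric, of _ n n _ n _ n])
      finally have "r = rowmul v' (e' * d)" using d by simp
      then show "r \<in> E_orbit n v'" unfolding E_orbit_def using En_mult[OF e'(1) d(1)] by blast
    qed
  qed
qed

lemma C1: assumes n3: "3 \<le> n" and v1: "v1 \<in> carrier_vec n" and w1: "w1 \<in> carrier_vec n"
  and v2: "v2 \<in> carrier_vec n" and w2: "w2 \<in> carrier_vec n" and e1: "v1 \<bullet> w1 = 1" and e2: "v2 \<bullet> w2 = 1"
  shows "(v2 @\<^sub>v w2) \<in> EO_orbit n (v1 @\<^sub>v w1) \<longleftrightarrow> (\<exists>\<epsilon>\<in>En n. v2 = rowmul v1 (\<epsilon> :: 'a::comm_ring_1 mat))"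
proof
  assume "v2 @\<^sub>v w2 \<in> EO_orbit n (v1 @\<^sub>v w1)"
  then obtain M where M: "M \<in> EO n" "v2 @\<^sub>v w2 = M *\<^sub>v (v1 @\<^sub>v w1)" unfolding EO_orbit_def by blast
  from EO_fwd[OF n3 M(1) v1 w1 e1] obtain \<epsilon> where ep: "\<epsilon> \<in> En n" "vec_first (M *\<^sub>v (v1 @\<^sub>v w1)) n = rowmul v1 \<epsilon>" by blast
  have "v2 = vec_first (v2 @\<^sub>v w2) n" by (rule vec_first_app[OF v2, symmetric])
  also have "\<dots> = rowmul v1 \<epsilon>" using M(2) ep(2) by simp
  finally show "\<exists>\<epsilon>\<in>En n. v2 = rowmul v1 \<epsilon>" using ep(1) by blast
next
  assume "\<exists>\<epsilon>\<in>En n. v2 = rowmul v1 \<epsilon>"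
  then obtain \<epsilon> where e: "\<epsilon> \<in> En n" "v2 = rowmul v1 \<epsilon>" by blast
  from bwd_E[OF e(1)] obtain M1 where M1: "M1 \<in> EO n" "vec_first (M1 *\<^sub>v (v1 @\<^sub>v w1)) n = rowmul v1 \<epsilon>"
    using v1 w1 by blast
  define p' where "p' = M1 *\<^sub>v (v1 @\<^sub>v w1)"
  have p'c: "p' \<in> carrier_vec (2*n)" unfolding p'_def
    by (rule mult_mat_vec_carrier[OF EO_carrier[OF M1(1)] app_carrier2[OF v1 w1]])
  define w'' where "w'' = vec_last p' n"
  have pv: "p' = v2 @\<^sub>v w''" using split2[OF p'c] M1(2) e(2) unfolding p'_def w''_def by simp
  have w''c: "w'' \<in> carrier_vec n" unfolding w''_def by simp
  have "v2 \<bullet> w'' = 1"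
  proof -
    have "v2 \<bullet> w'' = qform n p'" using pv qform_app[OF v2 w''c] by simp
    also have "\<dots> = qform n (v1 @\<^sub>v w1)" unfolding p'_def by (rule EO_q[OF M1(1) app_carrier2[OF v1 w1]])
    also have "\<dots> = 1" using qform_app[OF v1 w1] e1 by simp
    finally show ?thesis .
  qed
  from bwd_w[OF v2 w''c w2 this e2] obtain M2 where M2: "M2 \<in> EO n" "M2 *\<^sub>v (v2 @\<^sub>v w'') = v2 @\<^sub>v w2" by blast
  have "(M2 * M1) *\<^sub>v (v1 @\<^sub>v w1) = v2 @\<^sub>v w2"
    using op_mult_vec[OF EO_carrier[OF M2(1)] EO_carrier[OF M1(1)] app_carrier2[OF v1 w1]] M2(2) pv
    unfolding p'_def by simp
  then have "v2 @\<^sub>v w2 = (M2 * M1) *\<^sub>v (v1 @\<^sub>v w1)" by simp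
  then show "v2 @\<^sub>v w2 \<in> EO_orbit n (v1 @\<^sub>v w1)" unfolding EO_orbit_def using EO_mult[OF M2(1) M1(1)] by blast
qed

lemma Korb: assumes n3: "3 \<le> n" and v: "v \<in> carrier_vec n" and w: "w \<in> carrier_vec n"
  and v': "v' \<in> carrier_vec n" and w': "w' \<in> carrier_vec n" and vw: "v \<bullet> w = 1" and vw': "v' \<bullet> w' = 1"
  shows "E_orbit n v = E_orbit n v' \<longleftrightarrow> EO_orbit n (v @\<^sub>v w) = EO_orbit n (v' @\<^sub>v (w' :: 'a::comm_ring_1 vec))"
proof
  assume h: "E_orbit n v = E_orbit n v'"
  have "v' \<in> E_orbit n v" using E_orbit_self[OF v'] h by simp
  then obtain \<epsilon> where "\<epsilon> \<in> En n" "v' = rowmul v \<epsilon>" unfolding E_orbit_def by blast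
  then have "v' @\<^sub>v w' \<in> EO_orbit n (v @\<^sub>v w)" using C1[OF n3 v w v' w' vw vw'] by blast
  then show "EO_orbit n (v @\<^sub>v w) = EO_orbit n (v' @\<^sub>v w')"
    using EO_orbit_eq[OF app_carrier2[OF v w]] by simp
next
  assume h: "EO_orbit n (v @\<^sub>v w) = EO_orbit n (v' @\<^sub>v w')"
  have "v' @\<^sub>v w' \<in> EO_orbit n (v @\<^sub>v w)" using EO_orbit_self[OF app_carrier2[OF v' w']] h by simp
  then obtain \<epsilon> where "\<epsilon> \<in> En n" "v' = rowmul v \<epsilon>" using C1[OF n3 v w v' w' vw vw'] by blast
  then have "v' \<in> E_orbit n v" unfolding E_orbit_def by blast
  then show "E_orbit n v = E_orbit n v'" using E_orbit_eq[OF v] by simp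
qed

theorem theorem4p4:
  fixes n :: nat
  assumes "n \<ge> 3"
  shows "(\<forall>(v1::'a::comm_ring_1 vec) w1 v2 w2.
            v1 \<in> carrier_vec n \<and> w1 \<in> carrier_vec n \<and> v1 \<bullet> w1 = 1 \<and>
            v2 \<in> carrier_vec n \<and> w2 \<in> carrier_vec n \<and> v2 \<bullet> w2 = 1 \<longrightarrow>
            ((v2 @\<^sub>v w2) \<in> Epin_orbit n (v1 @\<^sub>v w1) \<longleftrightarrow> (\<exists>\<epsilon> \<in> En n. v2 = rowmul v1 \<epsilon>)))
       \<and> (\<exists>f. bij_betw f (E_orbit n ` (Um n :: 'a vec set)) (Epin_orbit n ` USph n) \<and>
              (\<forall>(v::'a vec) w. v \<in> carrier_vec n \<and> w \<in> carrier_vec n \<and> v \<bullet> w = 1 \<longrightarrow>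
                  f (E_orbit n v) = Epin_orbit n (v @\<^sub>v w)))
       \<and> Epin_orbit n ` (USph n :: 'a vec set) = EO_orbit n ` USph n"
proof -
  note n3 = assms
  have EP: "(Epin_orbit n :: 'a::comm_ring_1 vec \<Rightarrow> 'a vec set) = EO_orbit n"
    by (rule ext) (rule Epin_orbit_EO_orbit)
  have P1: "\<forall>(v1::'a vec) w1 v2 w2.
            v1 \<in> carrier_vec n \<and> w1 \<in> carrier_vec n \<and> v1 \<bullet> w1 = 1 \<and>
            v2 \<in> carrier_vec n \<and> w2 \<in> carrier_vec n \<and> v2 \<bullet> w2 = 1 \<longrightarrow>
            ((v2 @\<^sub>v w2) \<in> Epin_orbit n (v1 @\<^sub>v w1) \<longleftrightarrow> (\<exists>\<epsilon> \<in> En n. v2 = rowmul v1 \<epsilon>))"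
    unfolding EP using C1[OF n3] by blast
  define f where "f = (\<lambda>Q. EO_orbit n (SOME p. \<exists>v w. v \<in> carrier_vec n \<and> w \<in> carrier_vec n \<and> v \<bullet> w = 1 \<and>
      Q = E_orbit n v \<and> p = v @\<^sub>v (w :: 'a vec)))"
  have fval: "f (E_orbit n v) = EO_orbit n (v @\<^sub>v w)"
    if vw: "v \<in> carrier_vec n" "w \<in> carrier_vec n" "v \<bullet> w = 1" for v w :: "'a vec"
  proof -
    let ?P = "\<lambda>p. \<exists>v' w'. v' \<in> carrier_vec n \<and> w' \<in> carrier_vec n \<and> v' \<bullet> w' = 1 \<and>
      E_orbit n v = E_orbit n v' \<and> p = v' @\<^sub>v (w' :: 'a vec)"
    have "?P (v @\<^sub>v w)" using vw by blast
    then have "?P (SOME p. ?P p)" by (rule someI)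
    then obtain v' w' where vw': "v' \<in> carrier_vec n" "w' \<in> carrier_vec n" "v' \<bullet> w' = 1"
      "E_orbit n v = E_orbit n v'" "(SOME p. ?P p) = v' @\<^sub>v w'" by blast
    have "f (E_orbit n v) = EO_orbit n (v' @\<^sub>v w')" unfolding f_def using vw'(5) by simp
    also have "\<dots> = EO_orbit n (v @\<^sub>v w)"
      using Korb[OF n3 vw(1,2) vw'(1,2) vw(3) vw'(3)] vw'(4) by simp
    finally show ?thesis .
  qed
  have bij: "bij_betw f (E_orbit n ` (Um n :: 'a vec set)) (EO_orbit n ` USph n)"
    unfolding bij_betw_def
  proof
    show "inj_on f (E_orbit n ` (Um n :: 'a vec set))"
    proof (rule inj_onI)
      fix O1 O2 assume O1: "O1 \<in> E_orbit n ` (Um n :: 'a vec set)" and O2: "O2 \<in> E_orbit n ` (Um n :: 'a vec set)"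
        and eq: "f O1 = f O2"
      from O1 obtain v1 w1 where a1: "v1 \<in> carrier_vec n" "w1 \<in> carrier_vec n" "v1 \<bullet> w1 = 1" "O1 = E_orbit n v1"
        unfolding Um_def by blast
      from O2 obtain v2 w2 where a2: "v2 \<in> carrier_vec n" "w2 \<in> carrier_vec n" "v2 \<bullet> w2 = 1" "O2 = E_orbit n v2"
        unfolding Um_def by blast
      have "EO_orbit n (v1 @\<^sub>v w1) = EO_orbit n (v2 @\<^sub>v w2)"
        using eq fval[OF a1(1-3)] fval[OF a2(1-3)] a1(4) a2(4) by simp
      then show "O1 = O2" using Korb[OF n3 a1(1,2) a2(1,2) a1(3) a2(3)] a1(4) a2(4) by simp
    qed
    show "f ` E_orbit n ` (Um n :: 'a vec set) = EO_orbit n ` USph n"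
    proof
      show "f ` E_orbit n ` (Um n :: 'a vec set) \<subseteq> EO_orbit n ` USph n"
      proof
        fix X assume "X \<in> f ` E_orbit n ` (Um n :: 'a vec set)"
        then obtain v w where a: "v \<in> carrier_vec n" "w \<in> carrier_vec n" "v \<bullet> w = 1" "X = f (E_orbit n v)"
          unfolding Um_def by blast
        then have "X = EO_orbit n (v @\<^sub>v w)" using fval by simp
        moreover have "v @\<^sub>v w \<in> USph n" unfolding USph_def using a by blast
        ultimately show "X \<in> EO_orbit n ` USph n" by blast
      qed
      show "EO_orbit n ` USph n \<subseteq> f ` E_orbit n ` (Um n :: 'a vec set)"
      proof
        fix X assume "X \<in> EO_orbit n ` (USph n :: 'a vec set)"
        then obtain v w where a: "v \<in> carrier_vec n" "w \<in> carrier_vec n" "v \<bullet> w = 1" "X = EO_orbit n (v @\<^sub>v w)"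
          unfolding USph_def by blast
        then have "X = f (E_orbit n v)" using fval by simp
        moreover have "v \<in> Um n" unfolding Um_def using a by blast
        ultimately show "X \<in> f ` E_orbit n ` (Um n :: 'a vec set)" by blast
      qed
    qed
  qed
  have P2: "\<exists>f. bij_betw f (E_orbit n ` (Um n :: 'a vec set)) (Epin_orbit n ` USph n) \<and>
              (\<forall>(v::'a vec) w. v \<in> carrier_vec n \<and> w \<in> carrier_vec n \<and> v \<bullet> w = 1 \<longrightarrow>
                  f (E_orbit n v) = Epin_orbit n (v @\<^sub>v w))"
    unfolding EP using bij fval by blast
  have P3: "Epin_orbit n ` (USph n :: 'a vec set) = EO_orbit n ` USph n" unfolding EP ..
  show ?thesis using P1 P2 P3 by blast
qed


end
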